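(* Let $v_1,v_2,v_3\in\mathbb R^2$ be primitive integral vectors spanning $\mathbb R^2$ with $v_1+v_2+v_3=0$. Let $T^2=\mathbb R^2/\mathbb Z^2$ and for $j=1,2,3$ let $G_j\cong S^1\subset T^2$ be the subgroup covered by $\mathbb R v_j$, oriented by $v_j$. Let $V^1\subset\mathbb R^2$ be the tropical line (the non-smooth locus of $\max\{x_1,x_2,0\}$), with vertex $p=(0,0)$ and edges $D_1,D_2,D_3$ emanating from $p$, indexed in anticlockwise order. Let $X=\mathbb R^2\times T^2$ and $\Sigma_0=\bigcup_{j=1}^3 D_j\times G_j$. Then there exists $Q\subset\{p\}\times T^2$ such that $\Sigma=\Sigma_0\cup Q$ is an embedded piecewise smooth submanifold of $X$. *)

theory Defs
  imports "HOL-Analysis.Analysis"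
begin

definition integral_vec :: "real^2 \<Rightarrow> bool" where
  "integral_vec v \<longleftrightarrow> (\<forall>i. v $ i \<in> \<int>)"

definition primitive_vec :: "real^2 \<Rightarrow> bool" where
  "primitive_vec v \<longleftrightarrow> integral_vec v \<and>
     (\<forall>w (k::nat). integral_vec w \<and> v = real k *\<^sub>R w \<longrightarrow> k = 1)"

definition torus_map :: "real^2 \<Rightarrow> complex \<times> complex" where
  "torus_map x = (cis (2 * pi * x $ 1), cis (2 * pi * x $ 2))"

definition torus :: "(complex \<times> complex) set" where
  "torus = range torus_map"

definition circle_subgroup :: "real^2 \<Rightarrow> (complex \<times> complex) set" where
  "circle_subgroup v = torus_map ` {t *\<^sub>R v | t. True}"

definition trop_line :: "(real^2) set" where
  "trop_line = {x. (x$1 = x$2 \<and> x$2 \<ge> 0) \<or> (x$1 = 0 \<and> x$2 \<le> 0) \<or> (x$2 = 0 \<and> x$1 \<le> 0)}"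

definition ray :: "real^2 \<Rightarrow> (real^2) set" where
  "ray d = {t *\<^sub>R d | t. t \<ge> 0}"

text \<open>Edges of the tropical line in anticlockwise order (directions at 45, 180, 270 degrees).\<close>
definition edge1 :: "(real^2) set" where "edge1 = ray (vector [1, 1])"
definition edge2 :: "(real^2) set" where "edge2 = ray (vector [-1, 0])"
definition edge3 :: "(real^2) set" where "edge3 = ray (vector [0, -1])"


lemma trop_line_edges: "trop_line = edge1 \<union> edge2 \<union> edge3"
proof (intro equalityI subsetI)
  fix x :: "real^2" assume "x \<in> trop_line"
  then consider "x$1 = x$2" "x$2 \<ge> 0" | "x$1 = 0" "x$2 \<le> 0" | "x$2 = 0" "x$1 \<le> 0"
    unfolding trop_line_def by auto
  then show "x \<in> edge1 \<union> edge2 \<union> edge3"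
  proof cases
    case 1 then have "x = x$2 *\<^sub>R vector [1,1]" by (simp add: vec_eq_iff forall_2)
    with 1 show ?thesis unfolding edge1_def ray_def by blast
  next
    case 2 then have "x = (- x$2) *\<^sub>R vector [0,-1]" by (simp add: vec_eq_iff forall_2)
    with 2 show ?thesis unfolding edge3_def ray_def by (metis (mono_tags, lifting) UnI2 mem_Collect_eq neg_0_le_iff_le)
  next
    case 3 then have "x = (- x$1) *\<^sub>R vector [-1,0]" by (simp add: vec_eq_iff forall_2)
    with 3 show ?thesis unfolding edge2_def ray_def by (metis (mono_tags, lifting) UnI1 UnI2 mem_Collect_eq neg_0_le_iff_le)
  qed
next
  fix x :: "real^2" assume "x \<in> edge1 \<union> edge2 \<union> edge3"
  then show "x \<in> trop_line"
    unfolding edge1_def edge2_def edge3_def ray_def trop_line_def by auto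
qed

fun dderiv :: "'a::real_normed_vector list \<Rightarrow> ('a \<Rightarrow> 'b::real_normed_vector) \<Rightarrow> 'a \<Rightarrow> 'b" where
  "dderiv [] f = f"
| "dderiv (e # es) f = (\<lambda>x. frechet_derivative (dderiv es f) (at x) e)"

definition smooth_on :: "'a::euclidean_space set \<Rightarrow> ('a \<Rightarrow> 'b::real_normed_vector) \<Rightarrow> bool" where
  "smooth_on U f \<longleftrightarrow> (\<forall>es. set es \<subseteq> Basis \<longrightarrow> dderiv es f differentiable_on U)"

text \<open>S is an embedded piecewise smooth surface: every point has a neighbourhood N, open in S,
  homeomorphic to an open set W of R^2 via a chart phi which is piecewise smooth, i.e. W is
  covered by finitely many convex polygons on each of which phi agrees with a smooth
  immersion defined on an open neighbourhood of the piece.\<close>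
definition pw_smooth_surface :: "'b::euclidean_space set \<Rightarrow> bool" where
  "pw_smooth_surface S \<longleftrightarrow>
    (\<forall>x\<in>S. \<exists>(W::(real^2) set) N \<phi> \<phi>' P.
        open W \<and> x \<in> N \<and> openin (top_of_set S) N \<and> homeomorphism W N \<phi> \<phi>' \<and>
        finite P \<and> (\<forall>C\<in>P. polytope C) \<and> W \<subseteq> \<Union>P \<and>
        (\<forall>C\<in>P. \<exists>V \<psi>. open V \<and> C \<inter> W \<subseteq> V \<and> smooth_on V \<psi> \<and>
             (\<forall>y\<in>C \<inter> W. inj (frechet_derivative \<psi> (at y)) \<and> \<phi> y = \<psi> y)))"

end

theory Submission
  imports Defs
begin


definition cr :: "real^2 \<Rightarrow> real^2 \<Rightarrow> real" where "cr x y = x$1 * y$2 - x$2 * y$1"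

lemma integral_vec_iff: "integral_vec v \<longleftrightarrow> v$1 \<in> \<int> \<and> v$2 \<in> \<int>"
  by (auto simp: integral_vec_def forall_2)

lemma cis_eq_int: assumes "cis a = cis b" shows "\<exists>n::int. a - b = 2*pi*n"
proof -
  have "cis (a - b) = 1" using assms by (simp add: cis_divide[symmetric])
  from arg_cong[OF this, of Re] have "cos (a-b) = 1" by simp
  then obtain n::int where "a - b = n*2*pi" by (auto simp: cos_one_2pi_int)
  thus ?thesis by (intro exI[of _ n]) simp
qed

lemma torus_map_eq: assumes "torus_map x = torus_map y" shows "integral_vec (x - y)"
proof -
  have "\<forall>i. (x - y)$i \<in> \<int>"
  proof
    fix i :: 2
    have "cis (2*pi*x$i) = cis (2*pi*y$i)" using assms
      using exhaust_2[of i] by (auto simp: torus_map_def)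
    then obtain n::int where "2*pi*x$i - 2*pi*y$i = 2*pi*n" using cis_eq_int by blast
    then have "2*pi*(x$i - y$i) = 2*pi*n" by (simp add: algebra_simps)
    then have "x$i - y$i = n" by simp
    thus "(x - y)$i \<in> \<int>" by simp
  qed
  thus ?thesis by (simp add: integral_vec_def)
qed

lemma torus_map_periodic: assumes "integral_vec n" shows "torus_map (x + n) = torus_map x"
proof -
  have "n$1 \<in> \<int>" "n$2 \<in> \<int>" using assms by (auto simp: integral_vec_iff)
  then have "cis (2*pi*n$1) = 1" "cis (2*pi*n$2) = 1" by auto
  thus ?thesis by (simp add: torus_map_def distrib_left cis_mult[symmetric])
qed

lemma integral_small: assumes "integral_vec n" "norm n < 1" shows "n = 0"
proof -
  have "\<forall>i. n$i = 0"
  proof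
    fix i
    have "\<bar>n$i\<bar> < 1" using component_le_norm_cart[of n i] assms(2) by linarith
    moreover have "n$i \<in> \<int>" using assms(1) by (simp add: integral_vec_def)
    ultimately show "n$i = 0" by (metis Ints_nonzero_abs_less1)
  qed
  thus ?thesis by (simp add: vec_eq_iff)
qed

lemma cis_close:
  assumes "e > 0" shows "\<exists>d>0. \<forall>a. cmod (cis (2*pi*a) - cis (2*pi*a0)) < d \<longrightarrow> (\<exists>k\<in>\<int>. \<bar>a - k - a0\<bar> < e)"
proof -
  have "continuous (at 1) Arg" by (rule continuous_at_Arg) (auto simp: complex_nonpos_Reals_iff)
  then obtain d where d: "d > 0" "\<And>u. dist u 1 < d \<Longrightarrow> dist (Arg u) (Arg 1) < 2*pi*e"
    using assms unfolding continuous_at_eps_delta by (metis mult_pos_pos pi_gt_zero zero_less_numeral)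
  show ?thesis
  proof (intro exI[of _ d] conjI allI impI)
    fix a assume h: "cmod (cis (2*pi*a) - cis (2*pi*a0)) < d"
    define u where "u = cis (2*pi*(a - a0))"
    have "u - 1 = (cis (2*pi*a) - cis (2*pi*a0)) / cis (2*pi*a0)"
      by (simp add: u_def diff_divide_distrib cis_divide right_diff_distrib)
    then have "cmod (u - 1) = cmod (cis (2*pi*a) - cis (2*pi*a0))" by (simp add: norm_divide)
    then have "\<bar>Arg u\<bar> < 2*pi*e" using d(2)[of u] h by (simp add: dist_norm)
    have "cis (Arg u) = u" by (simp add: cis_Arg u_def)
    then obtain n::int where n: "Arg u - 2*pi*(a - a0) = 2*pi*n" using cis_eq_int u_def by metis
    have eq: "a - of_int (-n) - a0 = Arg u / (2*pi)" using n by (simp add: field_simps)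
    have "\<bar>Arg u / (2*pi)\<bar> < e" using \<open>\<bar>Arg u\<bar> < 2*pi*e\<close>
      by (simp add: abs_divide divide_less_eq mult.commute)
    then have "\<bar>a - of_int (-n) - a0\<bar> < e" by (simp only: eq)
    thus "\<exists>k\<in>\<int>. \<bar>a - k - a0\<bar> < e" by (metis Ints_of_int)
  qed (use d in auto)
qed

lemma torus_close:
  assumes "e > 0"
  shows "\<exists>d>0. \<forall>y. dist (torus_map y) (torus_map y0) < d \<longrightarrow> (\<exists>n. integral_vec n \<and> norm (y - n - y0) < e)"
proof -
  obtain d1 where d1: "d1 > 0" "\<And>a. cmod (cis (2*pi*a) - cis (2*pi*(y0$1))) < d1 \<Longrightarrow> (\<exists>k\<in>\<int>. \<bar>a - k - y0$1\<bar> < e/2)"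
    using cis_close[of "e/2" "y0$1"] assms by auto
  obtain d2 where d2: "d2 > 0" "\<And>a. cmod (cis (2*pi*a) - cis (2*pi*(y0$2))) < d2 \<Longrightarrow> (\<exists>k\<in>\<int>. \<bar>a - k - y0$2\<bar> < e/2)"
    using cis_close[of "e/2" "y0$2"] assms by auto
  show ?thesis
  proof (intro exI[of _ "min d1 d2"] conjI allI impI)
    fix y assume h: "dist (torus_map y) (torus_map y0) < min d1 d2"
    have "cmod (cis (2*pi*y$1) - cis (2*pi*(y0$1))) < d1"
      using dist_fst_le[of "torus_map y" "torus_map y0"] h by (simp add: torus_map_def dist_norm)
    then obtain k1 where k1: "k1 \<in> \<int>" "\<bar>y$1 - k1 - y0$1\<bar> < e/2" using d1 by blast
    have "cmod (cis (2*pi*y$2) - cis (2*pi*(y0$2))) < d2"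
      using dist_snd_le[of "torus_map y" "torus_map y0"] h by (simp add: torus_map_def dist_norm)
    then obtain k2 where k2: "k2 \<in> \<int>" "\<bar>y$2 - k2 - y0$2\<bar> < e/2" using d2 by blast
    define n :: "real^2" where "n = vector [k1, k2]"
    have "integral_vec n" using k1 k2 by (simp add: integral_vec_iff n_def)
    moreover have "norm (y - n - y0) < e"
      using norm_le_l1_cart[of "y - n - y0"] k1 k2 by (simp add: sum_2 n_def)
    ultimately show "\<exists>n. integral_vec n \<and> norm (y - n - y0) < e" by blast
  qed (use d1 d2 in auto)
qed

definition Mw :: "real^2 \<Rightarrow> real^2 \<Rightarrow> real^2 \<Rightarrow> real^2" where
  "Mw a b w = (1 / cr a b) *\<^sub>R (w$1 *\<^sub>R a + w$2 *\<^sub>R b)"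
definition Nw :: "real^2 \<Rightarrow> real^2 \<Rightarrow> real^2 \<Rightarrow> real^2" where
  "Nw a b y = vector [cr y b, cr a y]"

lemma cr_scaleR_left [simp]: "cr (c *\<^sub>R x) y = c * cr x y" by (simp add: cr_def algebra_simps)
lemma cr_scaleR_right [simp]: "cr x (c *\<^sub>R y) = c * cr x y" by (simp add: cr_def algebra_simps)
lemma cr_add_left [simp]: "cr (x + z) y = cr x y + cr z y" by (simp add: cr_def algebra_simps)
lemma cr_add_right [simp]: "cr x (y + z) = cr x y + cr x z" by (simp add: cr_def algebra_simps)
lemma cr_same [simp]: "cr x x = 0" by (simp add: cr_def algebra_simps)
lemma cr_anti: "cr b a = - cr a b" by (simp add: cr_def algebra_simps)

lemma Nw_Mw: "cr a b \<noteq> 0 \<Longrightarrow> Nw a b (Mw a b w) = w"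
  by (simp add: vec_eq_iff forall_2 Nw_def Mw_def cr_anti[of b a])

lemma Mw_Nw: assumes "cr a b \<noteq> 0" shows "Mw a b (Nw a b y) = y"
proof -
  have "cr y b * a$1 + cr a y * b$1 = cr a b * y$1" "cr y b * a$2 + cr a y * b$2 = cr a b * y$2"
    by (simp_all add: cr_def algebra_simps)
  then show ?thesis using assms by (simp add: vec_eq_iff forall_2 Nw_def Mw_def field_simps)
qed

lemma linear_Mw: "linear (Mw a b)"
  by (rule linearI) (simp_all add: vec_eq_iff forall_2 Mw_def algebra_simps)

lemma linear_Nw: "linear (Nw a b)"
  by (rule linearI) (simp_all add: vec_eq_iff forall_2 Nw_def cr_def algebra_simps)

lemma Nw_integral: "integral_vec a \<Longrightarrow> integral_vec b \<Longrightarrow> integral_vec n \<Longrightarrow> integral_vec (Nw a b n)"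
  by (simp add: integral_vec_iff Nw_def cr_def)

lemma cr_Mw1: "cr a b \<noteq> 0 \<Longrightarrow> cr a (Mw a b w) = w$2"
  by (simp add: Mw_def)
lemma cr_Mw2: "cr a b \<noteq> 0 \<Longrightarrow> cr b (Mw a b w) = - w$1"
  by (simp add: Mw_def cr_anti[of b a])
lemma cr_neg_left [simp]: "cr (- x) y = - cr x y" by (simp add: cr_def)
lemma cr_diff_left [simp]: "cr (x - z) y = cr x y - cr z y" by (simp add: cr_def algebra_simps)
lemma cr_Mw3: "cr a b \<noteq> 0 \<Longrightarrow> cr (-(a+b)) (Mw a b w) = w$1 - w$2"
  by (simp add: Mw_def cr_anti[of b a] field_simps)

lemma cr_self: "cr v (t *\<^sub>R v) = 0" by (simp add: cr_def)

lemma parallel: assumes "v \<noteq> 0" "cr v z = 0" shows "\<exists>t. z = t *\<^sub>R v"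
proof (cases "v$1 = 0")
  case True
  then have "v$2 \<noteq> 0" using assms(1) by (auto simp: vec_eq_iff forall_2)
  then show ?thesis using True assms(2)
    by (intro exI[of _ "z$2 / v$2"]) (auto simp: vec_eq_iff forall_2 cr_def)
next
  case False
  then show ?thesis using assms(2)
    by (intro exI[of _ "z$1 / v$1"]) (auto simp: vec_eq_iff forall_2 cr_def field_simps)
qed

lemma primitive_nonzero: assumes "primitive_vec v" shows "v \<noteq> 0"
proof
  assume "v = 0"
  have "integral_vec (0::real^2)" by (simp add: integral_vec_def)
  moreover have "v = real (2::nat) *\<^sub>R 0" using \<open>v = 0\<close> by simp
  ultimately have "(2::nat) = 1" using assms unfolding primitive_vec_def by blast
  thus False by simp
qed

lemma primitive_bezout: assumes "primitive_vec v" shows "\<exists>n. integral_vec n \<and> cr v n = 1"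
proof -
  have iv: "integral_vec v" and pr: "\<And>w k. integral_vec w \<Longrightarrow> v = real k *\<^sub>R w \<Longrightarrow> k = 1"
    using assms by (auto simp: primitive_vec_def)
  obtain i where i: "v$1 = of_int i" using iv by (auto simp: integral_vec_iff elim!: Ints_cases)
  obtain j where j: "v$2 = of_int j" using iv by (auto simp: integral_vec_iff elim!: Ints_cases)
  have g1: "gcd i j = 1"
  proof (rule ccontr)
    assume ne: "gcd i j \<noteq> 1"
    show False
    proof (cases "gcd i j = 0")
      case True
      then have "v = 0" using i j by (simp add: vec_eq_iff forall_2)
      then show False using primitive_nonzero assms by blast
    next
      case False
      define g where "g = gcd i j"
      have gpos: "g > 0" using False g_def by (simp add: order_le_neq_trans)
      define w :: "real^2" where "w = vector [of_int (i div g), of_int (j div g)]"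
      have "integral_vec w" by (simp add: w_def integral_vec_iff)
      moreover have "v = real (nat g) *\<^sub>R w"
      proof -
        have "i = g * (i div g)" "j = g * (j div g)" by (simp_all add: g_def)
        then have "real_of_int i = real_of_int g * real_of_int (i div g)"
                  "real_of_int j = real_of_int g * real_of_int (j div g)"
          by (metis of_int_mult)+
        then show ?thesis using i j gpos by (simp add: vec_eq_iff forall_2 w_def)
      qed
      ultimately have "nat g = 1" using pr by blast
      then show False using ne g_def by simp
    qed
  qed
  obtain u v' where uv: "u * i + v' * j = 1" using bezout_int[of i j] g1 by metis
  define n :: "real^2" where "n = vector [of_int (-v'), of_int u]"
  have "integral_vec n" by (simp add: n_def integral_vec_iff)
  moreover have "cr v n = 1"
  proof -
    have "real_of_int (u * i + v' * j) = 1" using uv by simp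
    then show ?thesis by (simp add: cr_def n_def i j algebra_simps)
  qed
  ultimately show ?thesis by blast
qed

lemma cr_lin: "cr v (y - k *\<^sub>R n) = cr v y - k * cr v n"
  by (simp add: cr_def algebra_simps)

lemma primitive_line: assumes "primitive_vec v" "cr v y \<in> \<int>"
  shows "\<exists>t n. integral_vec n \<and> y = t *\<^sub>R v + n"
proof -
  obtain n0 where n0: "integral_vec n0" "cr v n0 = 1" using primitive_bezout assms(1) by blast
  define k where "k = cr v y"
  have "cr v (y - k *\<^sub>R n0) = 0" by (simp add: cr_lin n0 k_def)
  then obtain t where t: "y - k *\<^sub>R n0 = t *\<^sub>R v" using parallel primitive_nonzero assms(1) by blast
  have "integral_vec (k *\<^sub>R n0)" using n0(1) assms(2) by (simp add: integral_vec_iff k_def)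
  moreover have "y = t *\<^sub>R v + k *\<^sub>R n0" using t by (simp add: algebra_simps)
  ultimately show ?thesis by blast
qed

definition Gm :: "real^2 \<Rightarrow> (real^2 \<Rightarrow> real^2) \<Rightarrow> real^2 \<Rightarrow> (real^2 \<Rightarrow> real^2) \<Rightarrow> complex \<Rightarrow> complex
   \<Rightarrow> real^2 \<Rightarrow> (real^2) \<times> complex \<times> complex" where
  "Gm c A y0 B \<beta>1 \<beta>2 = (\<lambda>x. (c + A x, (\<beta>1 * cis (2*pi*(y0 + B x)$1), \<beta>2 * cis (2*pi*(y0 + B x)$2))))"

lemma Gm_deriv:
  assumes "linear A" "linear B"
  shows "(Gm c A y0 B \<beta>1 \<beta>2 has_derivative (\<lambda>h. (A h, (\<beta>1 * ((2*pi*(B h)$1) *\<^sub>R (\<i> * cis (2*pi*(y0 + B x)$1))),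
          \<beta>2 * ((2*pi*(B h)$2) *\<^sub>R (\<i> * cis (2*pi*(y0 + B x)$2))))))) (at x)"
proof -
  have bA: "bounded_linear A" using assms(1) by (simp add: linear_conv_bounded_linear)
  have comp: "((\<lambda>x. 2*pi*(y0 + B x)$i) has_derivative (\<lambda>h. 2*pi*(B h)$i)) (at x)" for i
  proof -
    have "linear (\<lambda>x. 2*pi*(B x)$i)"
      using assms(2) by (auto intro!: linearI simp: linear_add linear_scale)
    then have bl: "bounded_linear (\<lambda>x. 2*pi*(B x)$i)" by (simp add: linear_conv_bounded_linear)
    have eq: "(\<lambda>x. 2*pi*(y0 + B x)$i) = (\<lambda>x. 2*pi*(B x)$i + 2*pi*y0$i)" by (auto simp: algebra_simps)
    show ?thesis unfolding eq
      by (rule has_derivative_add_const) (rule bounded_linear_imp_has_derivative[OF bl])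
  qed
  have c: "((\<lambda>x. \<beta> * cis (2*pi*(y0 + B x)$i)) has_derivative
      (\<lambda>h. \<beta> * ((2*pi*(B h)$i) *\<^sub>R (\<i> * cis (2*pi*(y0 + B x)$i))))) (at x)" for i \<beta>
    by (rule has_derivative_mult_right[OF has_derivative_cis[OF comp]])
  have a: "((\<lambda>x. c + A x) has_derivative A) (at x)"
    using has_derivative_add[OF has_derivative_const bounded_linear_imp_has_derivative[OF bA]] by simp
  show ?thesis unfolding Gm_def
    by (intro has_derivative_Pair a c)
qed

lemma Gm_frechet:
  assumes "linear A" "linear B"
  shows "frechet_derivative (Gm c A y0 B \<beta>1 \<beta>2) (at x) = (\<lambda>h. (A h, (\<beta>1 * ((2*pi*(B h)$1) *\<^sub>R (\<i> * cis (2*pi*(y0 + B x)$1))),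
          \<beta>2 * ((2*pi*(B h)$2) *\<^sub>R (\<i> * cis (2*pi*(y0 + B x)$2))))))"
  using frechet_derivative_at[OF Gm_deriv[OF assms]] by metis

lemma dderiv_Gm:
  assumes "linear A" "linear B"
  shows "\<exists>c' A' \<beta>1' \<beta>2'. linear A' \<and> dderiv es (Gm c A y0 B \<beta>1 \<beta>2) = Gm c' A' y0 B \<beta>1' \<beta>2'"
proof (induction es)
  case Nil
  then show ?case using assms by auto
next
  case (Cons e es)
  then obtain c' A' \<beta>1' \<beta>2' where h: "linear A'" "dderiv es (Gm c A y0 B \<beta>1 \<beta>2) = Gm c' A' y0 B \<beta>1' \<beta>2'"
    by blast
  have "dderiv (e # es) (Gm c A y0 B \<beta>1 \<beta>2) =
     Gm (A' e) (\<lambda>_. 0) y0 B (\<beta>1' * (of_real (2*pi*(B e)$1) * \<i>)) (\<beta>2' * (of_real (2*pi*(B e)$2) * \<i>))"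
    by (simp add: h Gm_frechet[OF h(1) assms(2)]) (simp add: Gm_def scaleR_conv_of_real mult_ac)
  moreover have "linear (\<lambda>_::real^2. 0::real^2)" by (simp add: linear_zero)
  ultimately show ?case by blast
qed

lemma smooth_Gm:
  assumes "linear A" "linear B"
  shows "smooth_on V (Gm c A y0 B \<beta>1 \<beta>2)"
  unfolding smooth_on_def
proof (intro allI impI)
  fix es :: "(real^2) list"
  obtain c' A' \<beta>1' \<beta>2' where h: "linear A'" "dderiv es (Gm c A y0 B \<beta>1 \<beta>2) = Gm c' A' y0 B \<beta>1' \<beta>2'"
    using dderiv_Gm[OF assms] by blast
  show "dderiv es (Gm c A y0 B \<beta>1 \<beta>2) differentiable_on V"
    unfolding h(2) differentiable_on_def
    using Gm_deriv[OF h(1) assms(2)] by (meson differentiableI has_derivative_at_withinI)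
qed

lemma inj_Gm:
  assumes "linear A" "linear B" "\<And>h. A h = 0 \<Longrightarrow> B h = 0 \<Longrightarrow> h = 0"
  shows "inj (frechet_derivative (Gm c A y0 B 1 1) (at x))"
proof (rule injI)
  fix h h'
  assume "frechet_derivative (Gm c A y0 B 1 1) (at x) h = frechet_derivative (Gm c A y0 B 1 1) (at x) h'"
  then have e: "A h = A h'" "(2*pi*(B h)$1) *\<^sub>R (\<i> * cis (2*pi*(y0 + B x)$1)) = (2*pi*(B h')$1) *\<^sub>R (\<i> * cis (2*pi*(y0 + B x)$1))"
     "(2*pi*(B h)$2) *\<^sub>R (\<i> * cis (2*pi*(y0 + B x)$2)) = (2*pi*(B h')$2) *\<^sub>R (\<i> * cis (2*pi*(y0 + B x)$2))"
    by (simp_all add: Gm_frechet[OF assms(1,2)])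
  have "(B h)$1 = (B h')$1" "(B h)$2 = (B h')$2" using e(2,3) by (auto simp: scaleR_cancel_right)
  then have "B (h - h') = 0" using assms(2) by (simp add: linear_diff vec_eq_iff forall_2)
  moreover have "A (h - h') = 0" using assms(1) e(1) by (simp add: linear_diff)
  ultimately have "h - h' = 0" using assms(3) by blast
  thus "h = h'" by simp
qed




definition Psi :: "real^2 \<Rightarrow> real^2 \<Rightarrow> (real^2) \<times> (real^2) \<Rightarrow> (real^2) \<times> complex \<times> complex" where
  "Psi a b p = (fst p, torus_map (Mw a b (snd p)))"

lemma continuous_on_torus_map: "continuous_on S torus_map"
  unfolding torus_map_def by (intro continuous_intros)

lemma continuous_on_Mw: "continuous_on S (Mw a b)"
  using linear_Mw by (simp add: linear_continuous_on linear_conv_bounded_linear)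

lemma continuous_on_Psi: "continuous_on S (Psi a b)"
proof -
  have "continuous_on S (\<lambda>p. torus_map (Mw a b (snd p)))"
    by (rule continuous_on_compose2[OF continuous_on_torus_map, of _ "\<lambda>p. Mw a b (snd p)"])
       (auto intro!: continuous_on_compose2[OF continuous_on_Mw] continuous_intros)
  then show ?thesis unfolding Psi_def by (intro continuous_intros) auto
qed

lemma norm_prod_le: "norm (z :: 'a::real_normed_vector \<times> 'b::real_normed_vector) \<le> norm (fst z) + norm (snd z)"
proof -
  have "z = (fst z, 0) + (0, snd z)" by simp
  then have "norm z \<le> norm (fst z, 0::'b) + norm (0::'a, snd z)" by (metis norm_triangle_ineq)
  thus ?thesis by (simp add: norm_Pair)
qed

lemma norm_snd_le': "norm (snd z) \<le> norm z"
  using norm_snd_le[of "snd z" "fst z"] by simp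

lemma integral_neg: "integral_vec n \<Longrightarrow> integral_vec (- n)"
  by (simp add: integral_vec_def)

lemma integral_diff: "integral_vec n \<Longrightarrow> integral_vec m \<Longrightarrow> integral_vec (n - m)"
  by (simp add: integral_vec_def)

lemma linear_fst': "linear fst" by (rule linearI) auto
lemma linear_snd': "linear snd" by (rule linearI) auto

lemma chart_lemma:
  fixes F :: "real^2 \<Rightarrow> (real^2) \<times> (real^2)" and p :: "(real^2) \<times> (real^2)"
    and Pc :: "((real^2) \<times> (real^2) \<times> (real^2 \<Rightarrow> (real^2) \<times> (real^2))) set"
  assumes ab: "integral_vec a" "integral_vec b" "cr a b \<noteq> 0"
    and T: "\<And>q w n. (q,w) \<in> T \<Longrightarrow> integral_vec n \<Longrightarrow> (q, w + n) \<in> T"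
    and Pfin: "finite Pc"
    and Plin: "\<And>\<alpha> \<beta> L. (\<alpha>,\<beta>,L) \<in> Pc \<Longrightarrow> linear L \<and> inj L"
    and Pcov: "\<And>x. \<exists>(\<alpha>,\<beta>,L)\<in>Pc. 0 \<le> \<alpha> \<bullet> x \<and> 0 \<le> \<beta> \<bullet> x"
    and PF: "\<And>\<alpha> \<beta> L x. (\<alpha>,\<beta>,L) \<in> Pc \<Longrightarrow> 0 \<le> \<alpha> \<bullet> x \<Longrightarrow> 0 \<le> \<beta> \<bullet> x \<Longrightarrow> F x = L x"
    and injF: "inj F"
    and e: "\<epsilon> > 0" and loc: "\<And>z. norm z < \<epsilon> \<Longrightarrow> (p + z \<in> T \<longleftrightarrow> z \<in> range F)"
  shows "\<exists>(W::(real^2) set) N \<phi> \<phi>' P. open W \<and> Psi a b p \<in> N \<and> openin (top_of_set (Psi a b ` T)) N \<and>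
      homeomorphism W N \<phi> \<phi>' \<and> finite P \<and> (\<forall>C\<in>P. polytope C) \<and> W \<subseteq> \<Union>P \<and>
      (\<forall>C\<in>P. \<exists>V \<psi>. open V \<and> C \<inter> W \<subseteq> V \<and> smooth_on V \<psi> \<and>
          (\<forall>y\<in>C \<inter> W. inj (frechet_derivative \<psi> (at y)) \<and> \<phi> y = \<psi> y))"
proof -
  define U where "U = (\<lambda>(\<alpha>::real^2,\<beta>::real^2,L::real^2 \<Rightarrow> (real^2) \<times> (real^2)). {x::real^2. 0 \<le> \<alpha> \<bullet> x \<and> 0 \<le> \<beta> \<bullet> x})"
  have Ucl: "closed (U i)" for i
    unfolding U_def by (cases i) (auto intro!: closed_Collect_conj closed_Collect_le continuous_intros)
  have UNIV_U: "UNIV = (\<Union>i\<in>Pc. U i)"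
    using Pcov unfolding U_def by fastforce
  have contF: "continuous_on UNIV F"
  proof -
    have "continuous_on (U i) F" if "i \<in> Pc" for i
    proof -
      obtain \<alpha> \<beta> L where i: "i = (\<alpha>,\<beta>,L)" by (cases i) auto
      have "linear L" using Plin that i by blast
      then have "continuous_on (U i) L" by (simp add: linear_continuous_on linear_conv_bounded_linear)
      moreover have "\<And>x. x \<in> U i \<Longrightarrow> F x = L x" using PF that i by (auto simp: U_def)
      ultimately show ?thesis using continuous_on_cong by force
    qed
    then have "continuous_on (\<Union>i\<in>Pc. U i) F" using Pfin Ucl by (intro continuous_on_closed_Union) auto
    then show ?thesis using UNIV_U by simp
  qed
  have F0: "F 0 = 0"
  proof -
    obtain \<alpha> \<beta> L where "(\<alpha>,\<beta>,L) \<in> Pc" "0 \<le> \<alpha> \<bullet> 0" "0 \<le> \<beta> \<bullet> (0::real^2)" using Pcov[of 0] by auto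
    then show ?thesis using PF Plin by (metis linear_0)
  qed
  have hom: "F (c *\<^sub>R x) = c *\<^sub>R F x" if "c \<ge> 0" for c x
  proof (cases "c = 0")
    case True then show ?thesis using F0 by simp
  next
    case False
    obtain \<alpha> \<beta> L where h: "(\<alpha>,\<beta>,L) \<in> Pc" "0 \<le> \<alpha> \<bullet> x" "0 \<le> \<beta> \<bullet> x" using Pcov[of x] by auto
    have "0 \<le> \<alpha> \<bullet> (c *\<^sub>R x)" "0 \<le> \<beta> \<bullet> (c *\<^sub>R x)" using h that by auto
    then have "F (c *\<^sub>R x) = L (c *\<^sub>R x)" using PF h(1) by blast
    also have "\<dots> = c *\<^sub>R L x" using Plin h(1) by (simp add: linear_scale)
    also have "\<dots> = c *\<^sub>R F x" using PF h by metis
    finally show ?thesis .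
  qed
  obtain m where m: "m > 0" "\<And>x. m * norm x \<le> norm (F x)"
  proof -
    have c1: "compact (sphere (0::real^2) 1)" by simp
    have c2: "sphere (0::real^2) 1 \<noteq> {}" by (simp add: sphere_eq_empty)
    have c3: "continuous_on (sphere 0 1) (\<lambda>x. norm (F x))"
      by (rule continuous_on_norm, rule continuous_on_subset[OF contF]) auto
    have "\<exists>x\<in>sphere 0 1. \<forall>y\<in>sphere 0 1. norm (F x) \<le> norm (F y)"
      by (rule continuous_attains_inf[OF c1 c2 c3])
    then obtain x0 where x0: "x0 \<in> sphere 0 1" "\<And>y. y \<in> sphere 0 1 \<Longrightarrow> norm (F x0) \<le> norm (F y)"
      by blast
    have "x0 \<noteq> 0" using x0(1) by auto
    then have "F x0 \<noteq> F 0" using injF by (simp add: inj_eq)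
    then have "F x0 \<noteq> 0" using F0 by simp
    then have pos: "norm (F x0) > 0" by simp
    have "norm (F x0) * norm x \<le> norm (F x)" for x
    proof (cases "x = 0")
      case True then show ?thesis using F0 by simp
    next
      case False
      have "(1/norm x) *\<^sub>R x \<in> sphere 0 1" using False by simp
      then have "norm (F x0) \<le> norm (F ((1/norm x) *\<^sub>R x))" using x0(2) by blast
      also have "\<dots> = norm (F x) / norm x" using hom[of "1/norm x" x] by simp
      finally show ?thesis using False by (simp add: field_simps)
    qed
    then show ?thesis using that[of "norm (F x0)"] pos by (simp add: mult.commute)
  qed
  obtain B where B: "B > 0" "\<And>y. norm (Nw a b y) \<le> norm y * B"
  proof -
    have "bounded_linear (Nw a b)" using linear_Nw by (simp add: linear_conv_bounded_linear)
    then show ?thesis using bounded_linear.pos_bounded that by blast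
  qed
  define \<rho> where "\<rho> = min \<epsilon> (1/4)"
  have \<rho>: "\<rho> > 0" "\<rho> \<le> \<epsilon>" "\<rho> \<le> 1/4" using e by (auto simp: \<rho>_def)
  define z0 where "z0 = torus_map (Mw a b (snd p))"
  obtain \<delta> where \<delta>: "\<delta> > 0" "\<And>y. dist (torus_map y) z0 < \<delta> \<Longrightarrow> (\<exists>n. integral_vec n \<and> norm (y - n - Mw a b (snd p)) < \<rho>/(2*B))"
    using torus_close[of "\<rho>/(2*B)" "Mw a b (snd p)"] \<rho> B unfolding z0_def by auto
  define \<phi> where "\<phi> = (\<lambda>x. Psi a b (p + F x))"
  have cphi: "continuous_on UNIV \<phi>" unfolding \<phi>_def
    by (rule continuous_on_compose2[OF continuous_on_Psi, of _ "\<lambda>x. p + F x"]) (auto intro!: continuous_intros contF)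
  define Ob where "Ob = ball (fst p) (\<rho>/2) \<times> ball z0 \<delta>"
  have openOb: "open Ob" unfolding Ob_def by (simp add: open_Times)
  define W where "W = {x. norm (F x) < \<rho>} \<inter> \<phi> -` Ob"
  have openW: "open W" unfolding W_def
    by (intro open_Int open_Collect_less open_vimage openOb cphi continuous_intros contF)
  define K where "K = {x. norm (F x) \<le> \<rho>}"
  have WK: "W \<subseteq> K" unfolding W_def K_def by auto
  have Kb: "K \<subseteq> cball 0 (\<rho>/m)"
  proof
    fix x assume "x \<in> K"
    then have "m * norm x \<le> \<rho>" using m(2)[of x] by (simp add: K_def)
    then show "x \<in> cball 0 (\<rho>/m)" using m(1) by (simp add: field_simps)
  qed
  have compK: "compact K"
  proof -
    have "closed K" unfolding K_def by (intro closed_Collect_le continuous_intros contF)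
    moreover have "bounded K" using Kb bounded_cball bounded_subset by blast
    ultimately show ?thesis by (simp add: compact_eq_bounded_closed)
  qed
  have injK: "inj_on \<phi> K"
  proof (rule inj_onI)
    fix x x' assume xK: "x \<in> K" "x' \<in> K" and eq: "\<phi> x = \<phi> x'"
    have f: "fst (F x) = fst (F x')" using eq by (simp add: \<phi>_def Psi_def)
    have "torus_map (Mw a b (snd p + snd (F x))) = torus_map (Mw a b (snd p + snd (F x')))"
      using eq by (simp add: \<phi>_def Psi_def)
    then have "integral_vec (Mw a b (snd p + snd (F x)) - Mw a b (snd p + snd (F x')))" by (rule torus_map_eq)
    then have "integral_vec (Mw a b (snd (F x) - snd (F x')))"
      using linear_Mw by (simp add: linear_diff linear_add)
    then have "integral_vec (snd (F x) - snd (F x'))" using Nw_integral[OF ab(1,2)] Nw_Mw[OF ab(3)] by metis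
    moreover have "norm (snd (F x) - snd (F x')) < 1"
    proof -
      have "norm (snd (F x) - snd (F x')) \<le> norm (snd (F x)) + norm (snd (F x'))" by (rule norm_triangle_ineq4)
      also have "\<dots> \<le> norm (F x) + norm (F x')" by (intro add_mono norm_snd_le')
      also have "\<dots> \<le> \<rho> + \<rho>" using xK by (intro add_mono) (auto simp: K_def)
      finally show ?thesis using \<rho> by simp
    qed
    ultimately have "snd (F x) = snd (F x')" using integral_small by force
    then have "F x = F x'" using f by (simp add: prod_eq_iff)
    then show "x = x'" using injF by (simp add: inj_eq)
  qed
  obtain g where g: "homeomorphism K (\<phi> ` K) \<phi> g"
    using homeomorphism_compact[OF compK continuous_on_subset[OF cphi] refl injK] by auto
  have hW: "homeomorphism W (\<phi> ` W) \<phi> g"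
    by (rule homeomorphism_of_subsets[OF g WK]) (use WK in auto)
  have p0: "Psi a b p \<in> \<phi> ` W"
  proof -
    have "\<phi> 0 = Psi a b p" by (simp add: \<phi>_def F0)
    moreover have "0 \<in> W" using \<rho> \<delta> by (simp add: W_def F0 \<phi>_def Ob_def z0_def Psi_def)
    ultimately show ?thesis by force
  qed
  have NO: "\<phi> ` W = Psi a b ` T \<inter> Ob"
  proof
    show "\<phi> ` W \<subseteq> Psi a b ` T \<inter> Ob"
    proof
      fix y assume "y \<in> \<phi> ` W"
      then obtain x where x: "x \<in> W" "y = \<phi> x" by auto
      have "norm (F x) < \<epsilon>" using x \<rho> by (auto simp: W_def)
      then have "p + F x \<in> T" using loc by blast
      then show "y \<in> Psi a b ` T \<inter> Ob" using x by (auto simp: W_def \<phi>_def)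
    qed
  next
    show "Psi a b ` T \<inter> Ob \<subseteq> \<phi> ` W"
    proof
      fix y assume "y \<in> Psi a b ` T \<inter> Ob"
      then obtain q w where qw: "(q,w) \<in> T" "y = Psi a b (q,w)" "y \<in> Ob" by auto
      have "dist (torus_map (Mw a b w)) z0 < \<delta>" "dist q (fst p) < \<rho>/2"
        using qw(2,3) by (auto simp: Ob_def Psi_def dist_commute)
      then obtain n where n: "integral_vec n" "norm (Mw a b w - n - Mw a b (snd p)) < \<rho>/(2*B)"
        using \<delta>(2) by blast
      define w' where "w' = w + (- Nw a b n)"
      have Tw': "(q, w') \<in> T" unfolding w'_def
        by (rule T[OF qw(1)]) (rule integral_neg[OF Nw_integral[OF ab(1,2) n(1)]])
      have "Mw a b w' = Mw a b w + (- n)"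
        by (simp only: w'_def linear_add[OF linear_Mw] linear_neg[OF linear_Mw] Mw_Nw[OF ab(3)])
      then have Psieq: "Psi a b (q,w') = y"
        using qw(2) torus_map_periodic[OF integral_neg[OF n(1)]] by (simp add: Psi_def)
      define z where "z = (q,w') - p"
      have "w' - snd p = Nw a b (Mw a b w - n - Mw a b (snd p))"
        by (simp add: w'_def linear_diff[OF linear_Nw] Nw_Mw[OF ab(3)])
      then have "norm (w' - snd p) \<le> norm (Mw a b w - n - Mw a b (snd p)) * B" using B(2) by simp
      also have "\<dots> < \<rho>/(2*B) * B" by (rule mult_strict_right_mono[OF n(2) B(1)])
      finally have s: "norm (snd z) < \<rho>/2" using B(1) by (simp add: z_def)
      have f: "norm (fst z) < \<rho>/2" using \<open>dist q (fst p) < \<rho>/2\<close> by (simp add: z_def dist_norm)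
      have "norm z < \<rho>" using norm_prod_le[of z] s f by linarith
      then have "p + z \<in> T \<longleftrightarrow> z \<in> range F" using loc \<rho> by simp
      moreover have "p + z = (q, w')" by (simp add: z_def)
      ultimately obtain x where x: "z = F x" using Tw' by auto
      have "p + F x = (q, w')" unfolding x[symmetric] z_def by simp
      then have "\<phi> x = y" using Psieq by (simp add: \<phi>_def)
      moreover have "x \<in> W" using \<open>norm z < \<rho>\<close> x qw(3) \<open>\<phi> x = y\<close> by (simp add: W_def)
      ultimately show "y \<in> \<phi> ` W" by blast
    qed
  qed
  have opN: "openin (top_of_set (Psi a b ` T)) (\<phi> ` W)"
    unfolding NO by (rule openin_open_Int[OF openOb])
  define R where "R = \<rho>/m"
  define box where "box = cbox (\<chi> i::2. - R) (\<chi> i. R)"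
  define P where "P = (\<lambda>(\<alpha>,\<beta>,L). {x::real^2. 0 \<le> \<alpha> \<bullet> x \<and> 0 \<le> \<beta> \<bullet> x} \<inter> box) ` Pc"
  have finP: "finite P" using Pfin by (simp add: P_def)
  have polyP: "\<forall>C\<in>P. polytope C"
  proof
    fix C assume "C \<in> P"
    then obtain \<alpha> \<beta> L where C: "C = {x::real^2. 0 \<le> \<alpha> \<bullet> x \<and> 0 \<le> \<beta> \<bullet> x} \<inter> box" by (auto simp: P_def)
    have "{x::real^2. 0 \<le> \<alpha> \<bullet> x \<and> 0 \<le> \<beta> \<bullet> x} = {x. \<alpha> \<bullet> x \<ge> 0} \<inter> {x. \<beta> \<bullet> x \<ge> 0}" by auto
    then have "polyhedron C" unfolding C box_def
      by (simp only:) (intro polyhedron_Int polyhedron_halfspace_ge polyhedron_interval)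
    moreover have "bounded C" unfolding C box_def by (simp add: bounded_Int)
    ultimately show "polytope C" by (simp add: polytope_eq_bounded_polyhedron)
  qed
  have WP: "W \<subseteq> \<Union>P"
  proof
    fix x assume "x \<in> W"
    then have "x \<in> cball 0 R" using WK Kb by (auto simp: R_def)
    then have "\<bar>x$i\<bar> \<le> R" for i using component_le_norm_cart[of x i] by simp
    then have "- R \<le> x$i \<and> x$i \<le> R" for i by (metis abs_le_iff minus_le_iff)
    then have "x \<in> box" by (auto simp: box_def mem_box_cart)
    moreover obtain \<alpha> \<beta> L where "(\<alpha>,\<beta>,L) \<in> Pc" "0 \<le> \<alpha> \<bullet> x" "0 \<le> \<beta> \<bullet> x" using Pcov[of x] by auto
    ultimately show "x \<in> \<Union>P" unfolding P_def by force
  qed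
  have smoothP: "\<forall>C\<in>P. \<exists>V \<psi>. open V \<and> C \<inter> W \<subseteq> V \<and> smooth_on V \<psi> \<and>
          (\<forall>y\<in>C \<inter> W. inj (frechet_derivative \<psi> (at y)) \<and> \<phi> y = \<psi> y)"
  proof
    fix C assume "C \<in> P"
    then obtain \<alpha> \<beta> L where L: "(\<alpha>,\<beta>,L) \<in> Pc" and C: "C = {x::real^2. 0 \<le> \<alpha> \<bullet> x \<and> 0 \<le> \<beta> \<bullet> x} \<inter> box"
      by (auto simp: P_def)
    have lL: "linear L" and iL: "inj L" using Plin L by auto
    define A where "A = fst \<circ> L"
    define Bm where "Bm = Mw a b \<circ> snd \<circ> L"
    have lA: "linear A" unfolding A_def by (intro linear_compose lL linear_fst')
    have lB: "linear Bm" unfolding Bm_def by (intro linear_compose lL linear_snd' linear_Mw)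
    define \<psi> where "\<psi> = Gm (fst p) A (Mw a b (snd p)) Bm 1 1"
    have psi_eq: "\<psi> x = Psi a b (p + L x)" for x
      using linear_Mw by (simp add: \<psi>_def Gm_def Psi_def A_def Bm_def torus_map_def linear_add)
    have injD: "inj (frechet_derivative \<psi> (at y))" for y
      unfolding \<psi>_def
    proof (rule inj_Gm[OF lA lB])
      fix h assume h: "A h = 0" "Bm h = 0"
      have "snd (L h) = 0" using h(2) Nw_Mw[OF ab(3), of "snd (L h)"] linear_Nw
        by (simp add: Bm_def linear_0)
      then have "L h = L 0" using h(1) lL by (simp add: A_def prod_eq_iff linear_0)
      then show "h = 0" using iL by (simp add: inj_eq)
    qed
    show "\<exists>V \<psi>. open V \<and> C \<inter> W \<subseteq> V \<and> smooth_on V \<psi> \<and>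
          (\<forall>y\<in>C \<inter> W. inj (frechet_derivative \<psi> (at y)) \<and> \<phi> y = \<psi> y)"
    proof (intro exI[of _ UNIV] exI[of _ \<psi>] conjI ballI)
      show "smooth_on UNIV \<psi>" unfolding \<psi>_def by (rule smooth_Gm[OF lA lB])
      fix y assume "y \<in> C \<inter> W"
      then have "F y = L y" using PF L C by auto
      then show "\<phi> y = \<psi> y" by (simp add: \<phi>_def psi_eq)
      show "inj (frechet_derivative \<psi> (at y))" by (rule injD)
    qed auto
  qed
  show ?thesis
    using openW p0 opN hW finP polyP WP smoothP by blast
qed




abbreviation "dd1 \<equiv> (vector [1,1] :: real^2)"
abbreviation "dd2 \<equiv> (vector [-1,0] :: real^2)"
abbreviation "dd3 \<equiv> (vector [0,-1] :: real^2)"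

lemma ray_dd1: "ray dd1 = {q. q$1 = q$2 \<and> q$1 \<ge> 0}"
proof (intro equalityI subsetI)
  fix q :: "real^2" assume "q \<in> ray dd1" then show "q \<in> {q. q$1 = q$2 \<and> q$1 \<ge> 0}" by (auto simp: ray_def)
next
  fix q :: "real^2" assume "q \<in> {q. q$1 = q$2 \<and> q$1 \<ge> 0}"
  then have "q = q$1 *\<^sub>R dd1" "q$1 \<ge> 0" by (auto simp: vec_eq_iff forall_2)
  then show "q \<in> ray dd1" unfolding ray_def by blast
qed

lemma ray_dd2: "ray dd2 = {q. q$2 = 0 \<and> q$1 \<le> 0}"
proof (intro equalityI subsetI)
  fix q :: "real^2" assume "q \<in> ray dd2" then show "q \<in> {q. q$2 = 0 \<and> q$1 \<le> 0}" by (auto simp: ray_def)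
next
  fix q :: "real^2" assume "q \<in> {q. q$2 = 0 \<and> q$1 \<le> 0}"
  then have "q = (- q$1) *\<^sub>R dd2" "- q$1 \<ge> 0" by (auto simp: vec_eq_iff forall_2)
  then show "q \<in> ray dd2" unfolding ray_def by blast
qed

lemma ray_dd3: "ray dd3 = {q. q$1 = 0 \<and> q$2 \<le> 0}"
proof (intro equalityI subsetI)
  fix q :: "real^2" assume "q \<in> ray dd3" then show "q \<in> {q. q$1 = 0 \<and> q$2 \<le> 0}" by (auto simp: ray_def)
next
  fix q :: "real^2" assume "q \<in> {q. q$1 = 0 \<and> q$2 \<le> 0}"
  then have "q = (- q$2) *\<^sub>R dd3" "- q$2 \<ge> 0" by (auto simp: vec_eq_iff forall_2)
  then show "q \<in> ray dd3" unfolding ray_def by blast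
qed

lemma span_dd1: "(\<exists>t. z = t *\<^sub>R dd1) \<longleftrightarrow> z$1 = z$2"
  by (auto simp: vec_eq_iff forall_2 intro: exI[of _ "z$1"])
lemma span_dd2: "(\<exists>t. z = t *\<^sub>R dd2) \<longleftrightarrow> z$2 = 0"
  by (auto simp: vec_eq_iff forall_2 intro!: exI[of _ "- z$1"])
lemma span_dd3: "(\<exists>t. z = t *\<^sub>R dd3) \<longleftrightarrow> z$1 = 0"
  by (auto simp: vec_eq_iff forall_2 intro!: exI[of _ "- z$2"])

lemma ray_local:
  assumes "d \<in> {dd1,dd2,dd3}" "d' \<in> {dd1,dd2,dd3}" "s0 > 0" "norm z < s0/2"
  shows "s0 *\<^sub>R d + z \<in> ray d' \<longleftrightarrow> d' = d \<and> (\<exists>t. z = t *\<^sub>R d)"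
proof -
  have z: "\<bar>z$1\<bar> < s0/2" "\<bar>z$2\<bar> < s0/2" using component_le_norm_cart[of z] assms(4) by (meson le_less_trans)+
  have ne: "dd1 \<noteq> dd2" "dd1 \<noteq> dd3" "dd2 \<noteq> dd3" by (auto simp: vec_eq_iff forall_2)
  show ?thesis using assms(1,2) z ne
    by (auto simp: ray_dd1 ray_dd2 ray_dd3 span_dd1 span_dd2 span_dd3)
qed

lemma ray_nonzero_local:
  assumes "d \<in> {dd1,dd2,dd3}" "s0 > 0" "norm z < s0/2"
  shows "s0 *\<^sub>R d + z \<noteq> 0"
proof -
  have z: "\<bar>z$1\<bar> < s0/2" "\<bar>z$2\<bar> < s0/2" using component_le_norm_cart[of z] assms(3) by (meson le_less_trans)+
  show ?thesis using assms(1) z by (auto simp: vec_eq_iff forall_2)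
qed

lemma rays_meet:
  assumes "d \<in> {dd1,dd2,dd3}" "d' \<in> {dd1,dd2,dd3}" "d \<noteq> d'" "s \<ge> 0" "s' \<ge> 0" "s *\<^sub>R d = s' *\<^sub>R d'"
  shows "s = 0 \<and> s' = 0"
  using assms by (auto simp: vec_eq_iff forall_2)

definition Stil :: "(real^2) set \<Rightarrow> (real^2) set \<Rightarrow> (real^2) set \<Rightarrow> ((real^2) \<times> (real^2)) set" where
  "Stil A B C = {(q,w). (q \<in> A \<and> w$2 \<in> \<int>) \<or> (q \<in> B \<and> w$1 \<in> \<int>) \<or> (q \<in> C \<and> w$1 - w$2 \<in> \<int>) \<or>
     (q = 0 \<and> frac (w$2) \<le> frac (w$1))}"

lemma Stil_inv: assumes "(q,w) \<in> Stil A B C" "integral_vec n" shows "(q, w + n) \<in> Stil A B C"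
proof -
  have n: "n$1 \<in> \<int>" "n$2 \<in> \<int>" using assms(2) by (auto simp: integral_vec_iff)
  have e1: "(w$1 + n$1 \<in> \<int>) = (w$1 \<in> \<int>)" "(w$2 + n$2 \<in> \<int>) = (w$2 \<in> \<int>)"
    using n by (metis Ints_add Ints_diff add_diff_cancel)+
  have "(w$1 + n$1) - (w$2 + n$2) = (w$1 - w$2) + (n$1 - n$2)" by simp
  then have e3: "((w$1 + n$1) - (w$2 + n$2) \<in> \<int>) = (w$1 - w$2 \<in> \<int>)"
    using n by (metis Ints_add Ints_diff add_diff_cancel)
  have f: "frac (w$1 + n$1) = frac (w$1)" "frac (w$2 + n$2) = frac (w$2)" using n by (simp_all add: frac_add_int_right)
  show ?thesis using assms(1) e1 e3 f by (auto simp: Stil_def)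
qed

lemma Stil_inv_iff: assumes "integral_vec n" shows "(q, w + n) \<in> Stil A B C \<longleftrightarrow> (q,w) \<in> Stil A B C"
  using Stil_inv[OF _ assms] Stil_inv[OF _ integral_neg[OF assms], of q "w + n"] by auto

definition good :: "((real^2) \<times> (real^2)) set \<Rightarrow> (real^2) \<times> (real^2) \<Rightarrow> bool" where
  "good T p \<longleftrightarrow> (\<exists>(F::real^2 \<Rightarrow> (real^2) \<times> (real^2)) (Pc::((real^2) \<times> (real^2) \<times> (real^2 \<Rightarrow> (real^2) \<times> (real^2))) set) \<epsilon>.
     finite Pc \<and> (\<forall>\<alpha> \<beta> L. (\<alpha>,\<beta>,L) \<in> Pc \<longrightarrow> linear L \<and> inj L) \<and>
     (\<forall>x. \<exists>(\<alpha>,\<beta>,L)\<in>Pc. 0 \<le> \<alpha> \<bullet> x \<and> 0 \<le> \<beta> \<bullet> x) \<and>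
     (\<forall>\<alpha> \<beta> L x. (\<alpha>,\<beta>,L) \<in> Pc \<longrightarrow> 0 \<le> \<alpha> \<bullet> x \<longrightarrow> 0 \<le> \<beta> \<bullet> x \<longrightarrow> F x = L x) \<and>
     inj F \<and> \<epsilon> > 0 \<and> (\<forall>z. norm z < \<epsilon> \<longrightarrow> (p + z \<in> T \<longleftrightarrow> z \<in> range F)))"

lemma good_chart:
  assumes ab: "integral_vec a" "integral_vec b" "cr a b \<noteq> 0"
    and g: "good (Stil A B C) p"
  shows "\<exists>(W::(real^2) set) N \<phi> \<phi>' P. open W \<and> Psi a b p \<in> N \<and> openin (top_of_set (Psi a b ` Stil A B C)) N \<and>
      homeomorphism W N \<phi> \<phi>' \<and> finite P \<and> (\<forall>C\<in>P. polytope C) \<and> W \<subseteq> \<Union>P \<and>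
      (\<forall>C\<in>P. \<exists>V \<psi>. open V \<and> C \<inter> W \<subseteq> V \<and> smooth_on V \<psi> \<and>
          (\<forall>y\<in>C \<inter> W. inj (frechet_derivative \<psi> (at y)) \<and> \<phi> y = \<psi> y))"
proof -
  obtain F :: "real^2 \<Rightarrow> (real^2) \<times> (real^2)" and Pc :: "((real^2) \<times> (real^2) \<times> (real^2 \<Rightarrow> (real^2) \<times> (real^2))) set" and \<epsilon> :: real
    where h: "finite Pc \<and> (\<forall>\<alpha> \<beta> L. (\<alpha>,\<beta>,L) \<in> Pc \<longrightarrow> linear L \<and> inj L) \<and>
     (\<forall>x. \<exists>(\<alpha>,\<beta>,L)\<in>Pc. 0 \<le> \<alpha> \<bullet> x \<and> 0 \<le> \<beta> \<bullet> x) \<and>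
     (\<forall>\<alpha> \<beta> L x. (\<alpha>,\<beta>,L) \<in> Pc \<longrightarrow> 0 \<le> \<alpha> \<bullet> x \<longrightarrow> 0 \<le> \<beta> \<bullet> x \<longrightarrow> F x = L x) \<and>
     inj F \<and> \<epsilon> > 0 \<and> (\<forall>z. norm z < \<epsilon> \<longrightarrow> (p + z \<in> Stil A B C \<longleftrightarrow> z \<in> range F))"
    using g unfolding good_def by (elim exE) (rule that, assumption)
  note h1 = conjunct1[OF h] and h2 = conjunct1[OF conjunct2[OF h]]
    and h3 = conjunct1[OF conjunct2[OF conjunct2[OF h]]]
    and h4 = conjunct1[OF conjunct2[OF conjunct2[OF conjunct2[OF h]]]]
    and h5 = conjunct1[OF conjunct2[OF conjunct2[OF conjunct2[OF conjunct2[OF h]]]]]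
    and h6 = conjunct1[OF conjunct2[OF conjunct2[OF conjunct2[OF conjunct2[OF conjunct2[OF h]]]]]]
    and h7 = conjunct2[OF conjunct2[OF conjunct2[OF conjunct2[OF conjunct2[OF conjunct2[OF h]]]]]]
  show ?thesis
    apply (rule chart_lemma[where T="Stil A B C" and F=F and Pc=Pc and \<epsilon>=\<epsilon> and p=p])
    apply (rule ab(1)) apply (rule ab(2)) apply (rule ab(3))
    apply (erule Stil_inv, assumption)
    apply (rule h1)
    apply (rule h2[rule_format], assumption)
    apply (rule h3[rule_format])
    apply (erule h4[rule_format], assumption, assumption)
    apply (rule h5) apply (rule h6)
    apply (erule h7[rule_format])
    done
qed

lemma good_shift: assumes "good T p" "\<And>z. p + z \<in> T \<longleftrightarrow> p' + z \<in> T" shows "good T p'"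
  using assms(1) unfolding good_def by (simp only: assms(2)[symmetric])

lemma good_single:
  fixes F :: "real^2 \<Rightarrow> (real^2) \<times> (real^2)"
  assumes "linear F" "inj F" "\<epsilon> > 0" "\<And>z. norm z < \<epsilon> \<Longrightarrow> (p + z \<in> T \<longleftrightarrow> z \<in> range F)"
  shows "good T p"
  unfolding good_def
  apply (rule exI[of _ F], rule exI[of _ "{(0,0,F)}"], rule exI[of _ \<epsilon>])
  using assms by auto

lemma vec2_inner: "(vector [a, b] :: real^2) \<bullet> x = a * x$1 + b * x$2"
  by (simp add: inner_vec_def sum_2)

lemma cramer: assumes "cr e u \<noteq> 0" shows "w = (cr w u / cr e u) *\<^sub>R e + (cr e w / cr e u) *\<^sub>R u"
proof -
  have "cr w u * e$1 + cr e w * u$1 = cr e u * w$1" "cr w u * e$2 + cr e w * u$2 = cr e u * w$2"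
    by (simp_all add: cr_def algebra_simps)
  then show ?thesis using assms by (simp add: vec_eq_iff forall_2 field_simps)
qed

lemma cr_coeffs: assumes "cr e u \<noteq> 0" "a *\<^sub>R e + b *\<^sub>R u = a' *\<^sub>R e + b' *\<^sub>R u" shows "a = a'" "b = b'"
proof -
  have "cr (a *\<^sub>R e + b *\<^sub>R u) u = cr (a' *\<^sub>R e + b' *\<^sub>R u) u" using assms(2) by simp
  then show "a = a'" using assms(1) by simp
  have "cr e (a *\<^sub>R e + b *\<^sub>R u) = cr e (a' *\<^sub>R e + b' *\<^sub>R u)" using assms(2) by simp
  then show "b = b'" using assms(1) by simp
qed

lemma good_strip:
  fixes d e :: "real^2"
  assumes "d \<noteq> 0" "e \<noteq> 0" "\<epsilon> > 0"
    "\<And>z. norm z < \<epsilon> \<Longrightarrow> (p + z \<in> T \<longleftrightarrow> (\<exists>s. fst z = s *\<^sub>R d) \<and> (\<exists>t. snd z = t *\<^sub>R e))"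
  shows "good T p"
proof (rule good_single[where F="\<lambda>x. (x$1 *\<^sub>R d, x$2 *\<^sub>R e)"])
  show "linear (\<lambda>x::real^2. (x$1 *\<^sub>R d, x$2 *\<^sub>R e))" by (rule linearI) (auto simp: algebra_simps)
  show "inj (\<lambda>x::real^2. (x$1 *\<^sub>R d, x$2 *\<^sub>R e))"
  proof (rule injI)
    fix x y :: "real^2" assume "(x$1 *\<^sub>R d, x$2 *\<^sub>R e) = (y$1 *\<^sub>R d, y$2 *\<^sub>R e)"
    then have "x$1 *\<^sub>R d = y$1 *\<^sub>R d" "x$2 *\<^sub>R e = y$2 *\<^sub>R e" by simp_all
    then have "x$1 = y$1" "x$2 = y$2" using assms(1,2) by (simp_all add: scaleR_cancel_right)
    then show "x = y" by (simp add: vec_eq_iff forall_2)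
  qed
  fix z :: "(real^2) \<times> (real^2)" assume "norm z < \<epsilon>"
  have "z \<in> range (\<lambda>x::real^2. (x$1 *\<^sub>R d, x$2 *\<^sub>R e)) \<longleftrightarrow> (\<exists>s. fst z = s *\<^sub>R d) \<and> (\<exists>t. snd z = t *\<^sub>R e)"
  proof
    assume "(\<exists>s. fst z = s *\<^sub>R d) \<and> (\<exists>t. snd z = t *\<^sub>R e)"
    then obtain s t where "fst z = s *\<^sub>R d" "snd z = t *\<^sub>R e" by blast
    then have "z = (\<lambda>x::real^2. (x$1 *\<^sub>R d, x$2 *\<^sub>R e)) (vector [s,t])" by (simp add: prod_eq_iff)
    then show "z \<in> range (\<lambda>x::real^2. (x$1 *\<^sub>R d, x$2 *\<^sub>R e))" by blast
  qed auto
  then show "p + z \<in> T \<longleftrightarrow> z \<in> range (\<lambda>x::real^2. (x$1 *\<^sub>R d, x$2 *\<^sub>R e))" using assms(4) \<open>norm z < \<epsilon>\<close> by simp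
qed (rule assms(3))

lemma good_interior:
  assumes "\<epsilon> > 0" "\<And>z. norm z < \<epsilon> \<Longrightarrow> (p + z \<in> T \<longleftrightarrow> fst z = 0)"
  shows "good T p"
proof (rule good_single[where F="\<lambda>x. (0, x)"])
  show "linear (\<lambda>x::real^2. (0::real^2, x))" by (rule linearI) auto
  show "inj (\<lambda>x::real^2. (0::real^2, x))" by (auto intro!: injI)
  fix z :: "(real^2) \<times> (real^2)" assume "norm z < \<epsilon>"
  have "z \<in> range (\<lambda>x::real^2. (0::real^2, x)) \<longleftrightarrow> fst z = 0"
    by (cases z) auto
  then show "p + z \<in> T \<longleftrightarrow> z \<in> range (\<lambda>x::real^2. (0::real^2, x))" using assms(2) \<open>norm z < \<epsilon>\<close> by simp
qed (rule assms(1))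

lemma linear_inj0: "linear f \<Longrightarrow> (\<And>x. f x = 0 \<Longrightarrow> x = 0) \<Longrightarrow> inj f"
proof -
  assume l: "linear f" and z: "\<And>x. f x = 0 \<Longrightarrow> x = 0"
  show "inj f"
  proof (rule injI)
    fix x y assume "f x = f y"
    then have "f (x - y) = 0" using l by (simp add: linear_diff)
    then show "x = y" using z by force
  qed
qed

lemma good_edge:
  fixes d e u nv :: "real^2"
  assumes d: "d \<noteq> 0" and eu: "cr e u \<noteq> 0" and n: "nv \<bullet> e = 0" "nv \<bullet> u = 1" and ep: "\<epsilon> > 0"
    and loc: "\<And>z. norm z < \<epsilon> \<Longrightarrow> (p + z \<in> T \<longleftrightarrow>
        (fst z = 0 \<and> nv \<bullet> snd z \<ge> 0) \<or> (\<exists>s\<ge>0. \<exists>t. fst z = s *\<^sub>R d \<and> snd z = t *\<^sub>R e))"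
  shows "good T p"
proof -
  define L1 where "L1 = (\<lambda>x::real^2. (0::real^2, x$1 *\<^sub>R e + x$2 *\<^sub>R u))"
  define L2 where "L2 = (\<lambda>x::real^2. ((- x$2) *\<^sub>R d, x$1 *\<^sub>R e))"
  define F where "F = (\<lambda>x::real^2. if x$2 \<ge> 0 then L1 x else L2 x)"
  define up :: "real^2" where "up = vector [0,1]"
  define dn :: "real^2" where "dn = vector [0,-1]"
  have e0: "e \<noteq> 0" using eu by (auto simp: cr_def)
  have lin: "linear L1" "linear L2" unfolding L1_def L2_def by (rule linearI; auto simp: algebra_simps)+
  have in1: "inj L1"
  proof (rule linear_inj0[OF lin(1)])
    fix x assume "L1 x = 0"
    then have "x$1 *\<^sub>R e + x$2 *\<^sub>R u = 0 *\<^sub>R e + 0 *\<^sub>R u" by (simp add: L1_def zero_prod_def)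
    then have "x$1 = 0" "x$2 = 0" using cr_coeffs[OF eu] by blast+
    then show "x = 0" by (simp add: vec_eq_iff forall_2)
  qed
  have in2: "inj L2"
  proof (rule linear_inj0[OF lin(2)])
    fix x assume "L2 x = 0"
    then have "(- x$2) *\<^sub>R d = 0" "x$1 *\<^sub>R e = 0" by (simp_all add: L2_def zero_prod_def)
    then have "x$2 = 0" "x$1 = 0" using d e0 by simp_all
    then show "x = 0" by (simp add: vec_eq_iff forall_2)
  qed
  have agree: "L1 x = L2 x" if "x$2 = 0" for x using that by (simp add: L1_def L2_def)
  have injF: "inj F"
  proof (rule injI)
    fix x y assume h: "F x = F y"
    show "x = y"
    proof (cases "x$2 \<ge> 0"; cases "y$2 \<ge> 0")
      assume "x$2 \<ge> 0" "y$2 \<ge> 0" then show ?thesis using h in1 by (simp add: F_def inj_eq)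
    next
      assume "\<not> x$2 \<ge> 0" "\<not> y$2 \<ge> 0" then show ?thesis using h in2 by (simp add: F_def inj_eq)
    next
      assume a: "x$2 \<ge> 0" "\<not> y$2 \<ge> 0"
      then have "0 = (- y$2) *\<^sub>R d" using h by (simp add: F_def L1_def L2_def prod_eq_iff)
      then show ?thesis using a d by simp
    next
      assume a: "\<not> x$2 \<ge> 0" "y$2 \<ge> 0"
      then have "0 = (- x$2) *\<^sub>R d" using h by (simp add: F_def L1_def L2_def prod_eq_iff)
      then show ?thesis using a d by simp
    qed
  qed
  have range: "z \<in> range F \<longleftrightarrow> (fst z = 0 \<and> nv \<bullet> snd z \<ge> 0) \<or> (\<exists>s\<ge>0. \<exists>t. fst z = s *\<^sub>R d \<and> snd z = t *\<^sub>R e)" for z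
  proof
    assume "z \<in> range F"
    then obtain x where x: "z = F x" by blast
    show "(fst z = 0 \<and> nv \<bullet> snd z \<ge> 0) \<or> (\<exists>s\<ge>0. \<exists>t. fst z = s *\<^sub>R d \<and> snd z = t *\<^sub>R e)"
    proof (cases "x$2 \<ge> 0")
      case True
      then show ?thesis using x n by (simp add: F_def L1_def inner_add_right)
    next
      case False
      then show ?thesis using x by (intro disjI2 exI[of _ "- x$2"]) (auto simp: F_def L2_def)
    qed
  next
    assume "(fst z = 0 \<and> nv \<bullet> snd z \<ge> 0) \<or> (\<exists>s\<ge>0. \<exists>t. fst z = s *\<^sub>R d \<and> snd z = t *\<^sub>R e)"
    then show "z \<in> range F"
    proof
      assume h: "fst z = 0 \<and> nv \<bullet> snd z \<ge> 0"
      define w where "w = snd z"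
      have wd: "w = (cr w u / cr e u) *\<^sub>R e + (cr e w / cr e u) *\<^sub>R u" by (rule cramer[OF eu])
      have "nv \<bullet> w = cr e w / cr e u"
        by (subst wd) (simp add: inner_add_right n)
      then have pos: "cr e w / cr e u \<ge> 0" using h by (simp add: w_def)
      define x :: "real^2" where "x = vector [cr w u / cr e u, cr e w / cr e u]"
      have "F x = (0, w)" using pos wd by (simp add: F_def L1_def x_def)
      then have "z = F x" using h by (simp add: prod_eq_iff w_def)
      then show ?thesis by blast
    next
      assume "\<exists>s\<ge>0. \<exists>t. fst z = s *\<^sub>R d \<and> snd z = t *\<^sub>R e"
      then obtain s t where st: "s \<ge> 0" "fst z = s *\<^sub>R d" "snd z = t *\<^sub>R e" by blast
      define x :: "real^2" where "x = vector [t, - s]"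
      have "F x = L2 x" using agree[of x] st(1) by (cases "s = 0") (auto simp: F_def x_def)
      also have "\<dots> = z" using st by (simp add: L2_def x_def prod_eq_iff)
      finally show ?thesis by (metis rangeI)
    qed
  qed
  define Pc where "Pc = {(up, up, L1), (dn, dn, L2)}"
  have c1: "finite Pc" by (simp add: Pc_def)
  have c2: "\<forall>\<alpha> \<beta> L. (\<alpha>, \<beta>, L) \<in> Pc \<longrightarrow> linear L \<and> inj L"
    using lin in1 in2 by (auto simp: Pc_def)
  have c3: "\<forall>x. \<exists>(\<alpha>, \<beta>, L)\<in>Pc. 0 \<le> \<alpha> \<bullet> x \<and> 0 \<le> \<beta> \<bullet> x"
  proof
    fix x :: "real^2"
    show "\<exists>(\<alpha>, \<beta>, L)\<in>Pc. 0 \<le> \<alpha> \<bullet> x \<and> 0 \<le> \<beta> \<bullet> x"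
      by (cases "x$2 \<ge> 0") (auto simp: Pc_def up_def dn_def vec2_inner)
  qed
  have c4: "\<forall>\<alpha> \<beta> L x. (\<alpha>, \<beta>, L) \<in> Pc \<longrightarrow> 0 \<le> \<alpha> \<bullet> x \<longrightarrow> 0 \<le> \<beta> \<bullet> x \<longrightarrow> F x = L x"
    using agree by (auto simp: Pc_def F_def up_def dn_def vec2_inner)
  have c7: "\<forall>z. norm z < \<epsilon> \<longrightarrow> (p + z \<in> T \<longleftrightarrow> z \<in> range F)"
    using loc range by simp
  show ?thesis unfolding good_def
    by (intro exI[of _ F] exI[of _ Pc] exI[of _ \<epsilon>] conjI c1 c2 c3 c4 injF ep c7)
qed

lemma int_near0: "\<bar>x::real\<bar> < 1 \<Longrightarrow> (x \<in> \<int> \<longleftrightarrow> x = 0)"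
  using Ints_nonzero_abs_less1[of x] by auto

lemma int_shift: "(a::real) \<in> \<int> \<Longrightarrow> (a + x \<in> \<int> \<longleftrightarrow> x \<in> \<int>)"
  by (metis Ints_add Ints_diff add_diff_cancel_left')

lemma not_int01: "0 < y \<Longrightarrow> y < (1::real) \<Longrightarrow> y \<notin> \<int>"
  by (auto elim!: Ints_cases)

lemma frac_small_pos: "0 \<le> x \<Longrightarrow> x < 1 \<Longrightarrow> frac x = x"
  by (simp add: frac_eq)

lemma frac_small_neg: "-1 < x \<Longrightarrow> x < 0 \<Longrightarrow> frac x = x + 1"
  by (subst frac_unique_iff) auto

lemma small_comp: "norm (z::(real^2)\<times>(real^2)) < \<epsilon> \<Longrightarrow> norm (fst z) < \<epsilon> \<and> \<bar>snd z $ 1\<bar> < \<epsilon> \<and> \<bar>snd z $ 2\<bar> < \<epsilon>"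
  using norm_snd_le'[of z] norm_fst_le[of "fst z" "snd z"] component_le_norm_cart[of "snd z"]
  by (smt (verit) prod.collapse)

definition dirs_ok :: "real^2 \<Rightarrow> real^2 \<Rightarrow> real^2 \<Rightarrow> bool" where
  "dirs_ok da db dc \<longleftrightarrow> da \<in> {dd1,dd2,dd3} \<and> db \<in> {dd1,dd2,dd3} \<and> dc \<in> {dd1,dd2,dd3} \<and>
     da \<noteq> db \<and> da \<noteq> dc \<and> db \<noteq> dc"

lemma dirs_nonzero: "d \<in> {dd1,dd2,dd3} \<Longrightarrow> d \<noteq> 0"
  by (auto simp: vec_eq_iff forall_2)

lemma strip_generic:
  assumes dirs: "d \<in> {dd1,dd2,dd3}" "d' \<in> {dd1,dd2,dd3}" "d'' \<in> {dd1,dd2,dd3}" "d \<noteq> d'" "d \<noteq> d''"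
    and s0: "s0 > 0" and e: "e \<noteq> 0"
    and T: "\<And>q w. (q,w) \<in> T \<longleftrightarrow> (q \<in> ray d \<and> P w) \<or> (q \<in> ray d' \<and> P' w) \<or> (q \<in> ray d'' \<and> P'' w) \<or> (q = 0 \<and> R w)"
    and line: "\<And>w. norm w < 1/2 \<Longrightarrow> (P (w0 + w) \<longleftrightarrow> (\<exists>t. w = t *\<^sub>R e))"
  shows "good T (s0 *\<^sub>R d, w0)"
proof (rule good_strip[where \<epsilon>="min (s0/2) (1/2)"])
  show "d \<noteq> 0" using dirs(1) by (rule dirs_nonzero)
  show "e \<noteq> 0" by (rule e)
  show "min (s0/2) (1/2) > 0" using s0 by simp
  fix z :: "(real^2) \<times> (real^2)" assume nz: "norm z < min (s0/2) (1/2)"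
  obtain q w where z: "z = (q,w)" by (cases z)
  have nq: "norm q < s0/2" and nw: "norm w < 1/2"
    using nz norm_fst_le[of q w] norm_snd_le[of w q] by (auto simp: z)
  have r1: "s0 *\<^sub>R d + q \<in> ray d \<longleftrightarrow> (\<exists>t. q = t *\<^sub>R d)" using ray_local[OF dirs(1) dirs(1) s0 nq] by simp
  have r2: "s0 *\<^sub>R d + q \<notin> ray d'" using ray_local[OF dirs(1) dirs(2) s0 nq] dirs(4) by simp
  have r3: "s0 *\<^sub>R d + q \<notin> ray d''" using ray_local[OF dirs(1) dirs(3) s0 nq] dirs(5) by simp
  have r0: "s0 *\<^sub>R d + q \<noteq> 0" by (rule ray_nonzero_local[OF dirs(1) s0 nq])
  have "(s0 *\<^sub>R d, w0) + z = (s0 *\<^sub>R d + q, w0 + w)" by (simp add: z)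
  then show "(s0 *\<^sub>R d, w0) + z \<in> T \<longleftrightarrow> (\<exists>s. fst z = s *\<^sub>R d) \<and> (\<exists>t. snd z = t *\<^sub>R e)"
    using T r1 r2 r3 r0 line[OF nw] by (simp add: z)
qed

lemma line1: assumes "w0$2 \<in> \<int>" "norm w < 1/2" shows "(w0 + w)$2 \<in> \<int> \<longleftrightarrow> (\<exists>t. w = t *\<^sub>R (vector [1,0] :: real^2))"
proof -
  have "\<bar>w$2\<bar> < 1" using component_le_norm_cart[of w 2] assms(2) by simp
  then have "(w0 + w)$2 \<in> \<int> \<longleftrightarrow> w$2 = 0" using int_shift[OF assms(1)] int_near0 by simp
  moreover have "(\<exists>t. w = t *\<^sub>R (vector [1,0] :: real^2)) \<longleftrightarrow> w$2 = 0"
    by (auto simp: vec_eq_iff forall_2 intro!: exI[of _ "w$1"])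
  ultimately show ?thesis by simp
qed

lemma line2: assumes "w0$1 \<in> \<int>" "norm w < 1/2" shows "(w0 + w)$1 \<in> \<int> \<longleftrightarrow> (\<exists>t. w = t *\<^sub>R (vector [0,1] :: real^2))"
proof -
  have "\<bar>w$1\<bar> < 1" using component_le_norm_cart[of w 1] assms(2) by simp
  then have "(w0 + w)$1 \<in> \<int> \<longleftrightarrow> w$1 = 0" using int_shift[OF assms(1)] int_near0 by simp
  moreover have "(\<exists>t. w = t *\<^sub>R (vector [0,1] :: real^2)) \<longleftrightarrow> w$1 = 0"
    by (auto simp: vec_eq_iff forall_2 intro!: exI[of _ "w$2"])
  ultimately show ?thesis by simp
qed

lemma line3: assumes "w0$1 - w0$2 \<in> \<int>" "norm w < 1/2"
  shows "(w0 + w)$1 - (w0 + w)$2 \<in> \<int> \<longleftrightarrow> (\<exists>t. w = t *\<^sub>R dd1)"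
proof -
  have "\<bar>w$1\<bar> < 1/2" "\<bar>w$2\<bar> < 1/2" using component_le_norm_cart[of w] assms(2) by (meson le_less_trans)+
  then have a: "\<bar>w$1 - w$2\<bar> < 1" by linarith
  have eq: "(w0 + w)$1 - (w0 + w)$2 = (w0$1 - w0$2) + (w$1 - w$2)" by simp
  have "(w0 + w)$1 - (w0 + w)$2 \<in> \<int> \<longleftrightarrow> w$1 - w$2 \<in> \<int>"
    unfolding eq by (rule int_shift[OF assms(1)])
  then have "(w0 + w)$1 - (w0 + w)$2 \<in> \<int> \<longleftrightarrow> w$1 - w$2 = 0"
    using int_near0[OF a] by simp
  then show ?thesis using span_dd1 by simp
qed

lemma good_qnz:
  assumes ok: "dirs_ok da db dc" and p: "(q0, w0) \<in> Stil (ray da) (ray db) (ray dc)" and q0: "q0 \<noteq> 0"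
  shows "good (Stil (ray da) (ray db) (ray dc)) (q0, w0)"
proof -
  have d: "da \<in> {dd1,dd2,dd3}" "db \<in> {dd1,dd2,dd3}" "dc \<in> {dd1,dd2,dd3}" "da \<noteq> db" "da \<noteq> dc" "db \<noteq> dc"
    using ok by (auto simp: dirs_ok_def)
  have e1: "(vector [1,0] :: real^2) \<noteq> 0" "(vector [0,1] :: real^2) \<noteq> 0" "dd1 \<noteq> 0"
    by (auto simp: vec_eq_iff forall_2)
  from p q0 consider "q0 \<in> ray da" "w0$2 \<in> \<int>" | "q0 \<in> ray db" "w0$1 \<in> \<int>" | "q0 \<in> ray dc" "w0$1 - w0$2 \<in> \<int>"
    by (auto simp: Stil_def)
  then show ?thesis
  proof cases
    case 1
    then obtain s0 where s0: "q0 = s0 *\<^sub>R da" "s0 \<ge> 0" by (auto simp: ray_def)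
    then have "s0 > 0" using q0 by (cases "s0 = 0") auto
    show ?thesis unfolding s0(1)
      apply (rule strip_generic[OF d(1,2,3,4,5) \<open>s0 > 0\<close> e1(1), where P="\<lambda>w. w$2 \<in> \<int>"
          and P'="\<lambda>w. w$1 \<in> \<int>" and P''="\<lambda>w. w$1 - w$2 \<in> \<int>" and R="\<lambda>w. frac (w$2) \<le> frac (w$1)"])
      apply (simp add: Stil_def)
      apply (rule line1[OF 1(2)], assumption)
      done
  next
    case 2
    then obtain s0 where s0: "q0 = s0 *\<^sub>R db" "s0 \<ge> 0" by (auto simp: ray_def)
    then have "s0 > 0" using q0 by (cases "s0 = 0") auto
    show ?thesis unfolding s0(1)
      apply (rule strip_generic[OF d(2,1,3) d(4)[symmetric] d(6) \<open>s0 > 0\<close> e1(2), where P="\<lambda>w. w$1 \<in> \<int>"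
          and P'="\<lambda>w. w$2 \<in> \<int>" and P''="\<lambda>w. w$1 - w$2 \<in> \<int>" and R="\<lambda>w. frac (w$2) \<le> frac (w$1)"])
      apply (simp add: Stil_def, blast)
      apply (rule line2[OF 2(2)], assumption)
      done
  next
    case 3
    then obtain s0 where s0: "q0 = s0 *\<^sub>R dc" "s0 \<ge> 0" by (auto simp: ray_def)
    then have "s0 > 0" using q0 by (cases "s0 = 0") auto
    show ?thesis unfolding s0(1)
      apply (rule strip_generic[OF d(3,1,2) d(5)[symmetric] d(6)[symmetric] \<open>s0 > 0\<close> e1(3), where P="\<lambda>w. w$1 - w$2 \<in> \<int>"
          and P'="\<lambda>w. w$2 \<in> \<int>" and P''="\<lambda>w. w$1 \<in> \<int>" and R="\<lambda>w. frac (w$2) \<le> frac (w$1)"])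
      apply (simp add: Stil_def, blast)
      apply (rule line3[OF 3(2)], assumption)
      done
  qed
qed

lemma span_e1: "(\<exists>t. w = t *\<^sub>R (vector [1,0] :: real^2)) \<longleftrightarrow> w$2 = 0"
  by (auto simp: vec_eq_iff forall_2 intro!: exI[of _ "w$1"])
lemma span_e2: "(\<exists>t. w = t *\<^sub>R (vector [0,1] :: real^2)) \<longleftrightarrow> w$1 = 0"
  by (auto simp: vec_eq_iff forall_2 intro!: exI[of _ "w$2"])

lemma edge_rhs: "((q = 0 \<and> 0 \<le> c) \<or> (\<exists>s\<ge>0. \<exists>t. q = s *\<^sub>R d \<and> w = t *\<^sub>R e)) \<longleftrightarrow>
   ((q \<in> ray d \<and> (\<exists>t. w = t *\<^sub>R e)) \<or> (q = 0 \<and> 0 \<le> c))"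
  by (auto simp: ray_def)

lemma good_edge1:
  assumes da: "da \<noteq> 0" and a: "0 < a" "a < 1"
  shows "good (Stil (ray da) B C) (0, vector [a, 0])"
proof (rule good_edge[OF da, where e="vector [1,0]" and u="vector [0,1]" and nv="vector [0,1]" and \<epsilon>="min a (1-a) / 2"])
  show "cr (vector [1,0]) (vector [0,1]) \<noteq> 0" by (simp add: cr_def)
  show "vector [0,1] \<bullet> (vector [1,0] :: real^2) = 0" "vector [0,1] \<bullet> (vector [0,1] :: real^2) = 1"
    by (simp_all add: vec2_inner)
  show "min a (1-a) / 2 > 0" using a by simp
  fix z :: "(real^2) \<times> (real^2)" assume nz: "norm z < min a (1-a) / 2"
  obtain q w where z: "z = (q,w)" by (cases z)
  have w: "\<bar>w$1\<bar> < min a (1-a) / 2" "\<bar>w$2\<bar> < min a (1-a) / 2" using small_comp[OF nz] by (auto simp: z)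
  have f1: "a + w$1 \<notin> \<int>" using w a by (intro not_int01) auto
  have f2: "a + w$1 - w$2 \<notin> \<int>" using w a by (intro not_int01) auto
  have f3: "w$2 \<in> \<int> \<longleftrightarrow> w$2 = 0" using w a by (intro int_near0) auto
  have f4: "frac (a + w$1) = a + w$1" using w a by (intro frac_small_pos) auto
  have f5: "frac (w$2) \<le> a + w$1 \<longleftrightarrow> 0 \<le> w$2"
  proof (cases "0 \<le> w$2")
    case True then show ?thesis using w a frac_small_pos[of "w$2"] by auto
  next
    case False then show ?thesis using w a frac_small_neg[of "w$2"] by auto
  qed
  have L: "(0, vector [a, 0]) + z \<in> Stil (ray da) B C \<longleftrightarrow> (q \<in> ray da \<and> w$2 = 0) \<or> (q = 0 \<and> 0 \<le> w$2)"
    using f1 f2 f3 f4 f5 by (auto simp: z Stil_def)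
  show "(0, vector [a, 0]) + z \<in> Stil (ray da) B C \<longleftrightarrow>
        (fst z = 0 \<and> 0 \<le> vector [0,1] \<bullet> snd z) \<or> (\<exists>s\<ge>0. \<exists>t. fst z = s *\<^sub>R da \<and> snd z = t *\<^sub>R vector [1,0])"
    unfolding L by (auto simp: z vec2_inner span_e1 ray_def)
qed

lemma good_edge2:
  assumes db: "db \<noteq> 0" and b: "0 < b" "b < 1"
  shows "good (Stil A (ray db) C) (0, vector [0, b])"
proof (rule good_edge[OF db, where e="vector [0,1]" and u="vector [-1,0]" and nv="vector [-1,0]" and \<epsilon>="min b (1-b) / 2"])
  show "cr (vector [0,1]) (vector [-1,0]) \<noteq> 0" by (simp add: cr_def)
  show "vector [-1,0] \<bullet> (vector [0,1] :: real^2) = 0" "vector [-1,0] \<bullet> (vector [-1,0] :: real^2) = 1"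
    by (simp_all add: vec2_inner)
  show "min b (1-b) / 2 > 0" using b by simp
  fix z :: "(real^2) \<times> (real^2)" assume nz: "norm z < min b (1-b) / 2"
  obtain q w where z: "z = (q,w)" by (cases z)
  have w: "\<bar>w$1\<bar> < min b (1-b) / 2" "\<bar>w$2\<bar> < min b (1-b) / 2" using small_comp[OF nz] by (auto simp: z)
  have f1: "b + w$2 \<notin> \<int>" using w b by (intro not_int01) auto
  have f2: "w$1 - (b + w$2) \<notin> \<int>"
  proof
    assume "w$1 - (b + w$2) \<in> \<int>"
    then have "- (w$1 - (b + w$2)) \<in> \<int>" by (rule Ints_minus)
    moreover have "- (w$1 - (b + w$2)) \<notin> \<int>" using w b by (intro not_int01) auto
    ultimately show False by blast
  qed
  have f3: "w$1 \<in> \<int> \<longleftrightarrow> w$1 = 0" using w b by (intro int_near0) auto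
  have f4: "frac (b + w$2) = b + w$2" using w b by (intro frac_small_pos) auto
  have f5: "b + w$2 \<le> frac (w$1) \<longleftrightarrow> w$1 < 0"
  proof (cases "0 \<le> w$1")
    case True then show ?thesis using w b frac_small_pos[of "w$1"] by auto
  next
    case False then show ?thesis using w b frac_small_neg[of "w$1"] by auto
  qed
  have zero_in: "0 \<in> ray db" by (auto simp: ray_def intro!: exI[of _ 0])
  have L: "(0, vector [0, b]) + z \<in> Stil A (ray db) C \<longleftrightarrow> (q \<in> ray db \<and> w$1 = 0) \<or> (q = 0 \<and> 0 \<le> - w$1)"
    using f1 f2 f3 f4 f5 zero_in by (auto simp: z Stil_def)
  show "(0, vector [0, b]) + z \<in> Stil A (ray db) C \<longleftrightarrow>
        (fst z = 0 \<and> 0 \<le> vector [-1,0] \<bullet> snd z) \<or> (\<exists>s\<ge>0. \<exists>t. fst z = s *\<^sub>R db \<and> snd z = t *\<^sub>R vector [0,1])"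
    unfolding L by (auto simp: z vec2_inner span_e2 ray_def)
qed

lemma good_edge3:
  assumes dc: "dc \<noteq> 0" and a: "0 < a" "a < 1"
  shows "good (Stil A B (ray dc)) (0, vector [a, a])"
proof (rule good_edge[OF dc, where e="dd1" and u="vector [1,0]" and nv="vector [1,-1]" and \<epsilon>="min a (1-a) / 2"])
  show "cr dd1 (vector [1,0]) \<noteq> 0" by (simp add: cr_def)
  show "vector [1,-1] \<bullet> dd1 = 0" "vector [1,-1] \<bullet> (vector [1,0] :: real^2) = 1"
    by (simp_all add: vec2_inner)
  show "min a (1-a) / 2 > 0" using a by simp
  fix z :: "(real^2) \<times> (real^2)" assume nz: "norm z < min a (1-a) / 2"
  obtain q w where z: "z = (q,w)" by (cases z)
  have w: "\<bar>w$1\<bar> < min a (1-a) / 2" "\<bar>w$2\<bar> < min a (1-a) / 2" using small_comp[OF nz] by (auto simp: z)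
  have f1: "a + w$1 \<notin> \<int>" "a + w$2 \<notin> \<int>" using w a by (intro not_int01; auto)+
  have f3: "a + w$1 - (a + w$2) \<in> \<int> \<longleftrightarrow> w$1 = w$2" using w a int_near0[of "w$1 - w$2"] by auto
  have f4: "frac (a + w$1) = a + w$1" "frac (a + w$2) = a + w$2" using w a by (intro frac_small_pos; auto)+
  have L: "(0, vector [a, a]) + z \<in> Stil A B (ray dc) \<longleftrightarrow> (q \<in> ray dc \<and> w$1 = w$2) \<or> (q = 0 \<and> 0 \<le> w$1 - w$2)"
    using f1 f3 f4 by (auto simp: z Stil_def)
  show "(0, vector [a, a]) + z \<in> Stil A B (ray dc) \<longleftrightarrow>
        (fst z = 0 \<and> 0 \<le> vector [1,-1] \<bullet> snd z) \<or> (\<exists>s\<ge>0. \<exists>t. fst z = s *\<^sub>R dc \<and> snd z = t *\<^sub>R dd1)"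
    unfolding L by (auto simp: z vec2_inner span_dd1 ray_def)
qed

lemma good_int:
  assumes a: "0 < b" "b < a" "a < 1"
  shows "good (Stil A B C) (0, vector [a, b])"
proof (rule good_interior[where \<epsilon>="min (min b (a-b)) (1-a) / 2"])
  show "min (min b (a-b)) (1-a) / 2 > 0" using a by simp
  fix z :: "(real^2) \<times> (real^2)" assume nz: "norm z < min (min b (a-b)) (1-a) / 2"
  obtain q w where z: "z = (q,w)" by (cases z)
  have w: "\<bar>w$1\<bar> < min (min b (a-b)) (1-a) / 2" "\<bar>w$2\<bar> < min (min b (a-b)) (1-a) / 2"
    using small_comp[OF nz] by (auto simp: z)
  have f1: "a + w$1 \<notin> \<int>" "b + w$2 \<notin> \<int>" "a + w$1 - (b + w$2) \<notin> \<int>" using w a by (intro not_int01; auto)+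
  have f4: "frac (a + w$1) = a + w$1" "frac (b + w$2) = b + w$2" using w a by (intro frac_small_pos; auto)+
  have f5: "b + w$2 \<le> a + w$1" using w a by auto
  show "(0, vector [a, b]) + z \<in> Stil A B C \<longleftrightarrow> fst z = 0"
    using f1 f4 f5 by (auto simp: z Stil_def)
qed

lemma good_normalize:
  assumes "good (Stil A B C) (0, w0 - n)" "integral_vec n"
  shows "good (Stil A B C) (0, w0)"
proof (rule good_shift[OF assms(1)])
  fix z :: "(real^2) \<times> (real^2)"
  obtain q w where z: "z = (q,w)" by (cases z)
  have "(q, (w0 - n + w) + n) \<in> Stil A B C \<longleftrightarrow> (q, w0 - n + w) \<in> Stil A B C" by (rule Stil_inv_iff[OF assms(2)])
  moreover have "(w0 - n + w) + n = w0 + w" by simp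
  ultimately show "(0, w0 - n) + z \<in> Stil A B C \<longleftrightarrow> (0, w0) + z \<in> Stil A B C" by (simp add: z)
qed




lemma r_in: "s \<ge> 0 \<Longrightarrow> s *\<^sub>R d \<in> ray d" by (auto simp: ray_def)

lemma coef: "d \<noteq> 0 \<Longrightarrow> ((s *\<^sub>R d) \<bullet> d) / (d \<bullet> d) = s" by simp

locale vert =
  fixes d1 d2 d3 :: "real^2"
  assumes ok: "dirs_ok d1 d2 d3"
begin

lemma nz: "d1 \<noteq> 0" "d2 \<noteq> 0" "d3 \<noteq> 0" using ok dirs_nonzero by (auto simp: dirs_ok_def)

lemma r_out:
  assumes "s > 0"
  shows "s *\<^sub>R d2 \<notin> ray d1" "s *\<^sub>R d3 \<notin> ray d1" "s *\<^sub>R d3 \<notin> ray d2"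
proof -
  have d: "d1 \<in> {dd1,dd2,dd3}" "d2 \<in> {dd1,dd2,dd3}" "d3 \<in> {dd1,dd2,dd3}" "d1 \<noteq> d2" "d1 \<noteq> d3" "d2 \<noteq> d3"
    using ok by (auto simp: dirs_ok_def)
  show "s *\<^sub>R d2 \<notin> ray d1"
  proof
    assume "s *\<^sub>R d2 \<in> ray d1"
    then obtain t where "t \<ge> 0" "s *\<^sub>R d2 = t *\<^sub>R d1" by (auto simp: ray_def)
    then show False using rays_meet[OF d(2) d(1) d(4)[symmetric], of s t] assms by auto
  qed
  show "s *\<^sub>R d3 \<notin> ray d1"
  proof
    assume "s *\<^sub>R d3 \<in> ray d1"
    then obtain t where "t \<ge> 0" "s *\<^sub>R d3 = t *\<^sub>R d1" by (auto simp: ray_def)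
    then show False using rays_meet[OF d(3) d(1) d(5)[symmetric], of s t] assms by auto
  qed
  show "s *\<^sub>R d3 \<notin> ray d2"
  proof
    assume "s *\<^sub>R d3 \<in> ray d2"
    then obtain t where "t \<ge> 0" "s *\<^sub>R d3 = t *\<^sub>R d2" by (auto simp: ray_def)
    then show False using rays_meet[OF d(3) d(2) d(6)[symmetric], of s t] assms by auto
  qed
qed

definition "L1 (x::real^2) = ((0::real^2), (vector [x$1, x$2] :: real^2))"
definition "L2 (x::real^2) = ((x$2 - x$1) *\<^sub>R d3, (vector [x$1, x$1] :: real^2))"
definition "L3 (x::real^2) = ((x$1 + x$2) *\<^sub>R d3, (vector [x$1, x$1] :: real^2))"
definition "L4 (x::real^2) = ((0::real^2), (vector [- x$2, x$1] :: real^2))"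
definition "L5 (x::real^2) = ((- x$2) *\<^sub>R d2, (vector [0, x$1 - x$2] :: real^2))"
definition "L6 (x::real^2) = ((- x$1) *\<^sub>R d2, (vector [0, x$1 - x$2] :: real^2))"
definition "L7 (x::real^2) = ((0::real^2), (vector [- x$1, -2 * x$1 - x$2] :: real^2))"
definition "L8 (x::real^2) = ((2 * x$1 + x$2) *\<^sub>R d1, (vector [x$1 + x$2, 0] :: real^2))"
definition "L9 (x::real^2) = ((- x$2) *\<^sub>R d1, (vector [x$1 + x$2, 0] :: real^2))"

definition "Fv (x::real^2) = (let a = x$1; b = x$2 in
  if 0 \<le> a - b \<and> 0 \<le> b then L1 x
  else if 0 \<le> a \<and> 0 \<le> b - a then L2 x
  else if 0 \<le> a + b \<and> 0 \<le> - a then L3 x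
  else if 0 \<le> b \<and> 0 \<le> - a - b then L4 x
  else if 0 \<le> b - a \<and> 0 \<le> - b then L5 x
  else if 0 \<le> - a \<and> 0 \<le> a - b then L6 x
  else if 0 \<le> -2 * a - b \<and> 0 \<le> a then L7 x
  else if 0 \<le> - a - b \<and> 0 \<le> 2 * a + b then L8 x
  else L9 x)"

lemmas Ldefs = L1_def L2_def L3_def L4_def L5_def L6_def L7_def L8_def L9_def

lemma PF1: fixes x :: "real^2" shows "0 \<le> x$1 - x$2 \<Longrightarrow> 0 \<le> x$2 \<Longrightarrow> Fv x = L1 x"
  by (simp add: Fv_def Let_def)
lemma PF2: fixes x :: "real^2" shows "0 \<le> x$1 \<Longrightarrow> 0 \<le> x$2 - x$1 \<Longrightarrow> Fv x = L2 x"
  using nz by (auto simp: Fv_def Let_def Ldefs prod_eq_iff vec_eq_iff forall_2)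
lemma PF3: fixes x :: "real^2" shows "0 \<le> x$1 + x$2 \<Longrightarrow> 0 \<le> - x$1 \<Longrightarrow> Fv x = L3 x"
  using nz by (auto simp: Fv_def Let_def Ldefs prod_eq_iff vec_eq_iff forall_2 scaleR_cancel_right)
lemma PF4: fixes x :: "real^2" shows "0 \<le> x$2 \<Longrightarrow> 0 \<le> - x$1 - x$2 \<Longrightarrow> Fv x = L4 x"
  using nz by (auto simp: Fv_def Let_def Ldefs prod_eq_iff vec_eq_iff forall_2 scaleR_cancel_right)
lemma PF5: fixes x :: "real^2" shows "0 \<le> x$2 - x$1 \<Longrightarrow> 0 \<le> - x$2 \<Longrightarrow> Fv x = L5 x"
  using nz by (auto simp: Fv_def Let_def Ldefs prod_eq_iff vec_eq_iff forall_2 scaleR_cancel_right)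
lemma PF6: fixes x :: "real^2" shows "0 \<le> - x$1 \<Longrightarrow> 0 \<le> x$1 - x$2 \<Longrightarrow> Fv x = L6 x"
  using nz by (auto simp: Fv_def Let_def Ldefs prod_eq_iff vec_eq_iff forall_2 scaleR_cancel_right)
lemma PF7: fixes x :: "real^2" shows "0 \<le> -2 * x$1 - x$2 \<Longrightarrow> 0 \<le> x$1 \<Longrightarrow> Fv x = L7 x"
  using nz by (auto simp: Fv_def Let_def Ldefs prod_eq_iff vec_eq_iff forall_2 scaleR_cancel_right)
lemma PF8: fixes x :: "real^2" shows "0 \<le> - x$1 - x$2 \<Longrightarrow> 0 \<le> 2 * x$1 + x$2 \<Longrightarrow> Fv x = L8 x"
  using nz by (auto simp: Fv_def Let_def Ldefs prod_eq_iff vec_eq_iff forall_2 scaleR_cancel_right)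
lemma PF9: fixes x :: "real^2" assumes h: "0 \<le> - x$2" "0 \<le> x$1 + x$2" shows "Fv x = L9 x"
proof (cases "0 \<le> - x$1 - x$2 \<and> 0 \<le> 2 * x$1 + x$2")
  case True
  then have e: "2 * x$1 + x$2 = - x$2" using h by linarith
  have "L8 x = L9 x" unfolding L8_def L9_def e by simp
  then show ?thesis using PF8 True by simp
next
  case False
  then show ?thesis using nz h by (auto simp: Fv_def Let_def Ldefs prod_eq_iff vec_eq_iff forall_2 scaleR_cancel_right)
qed

lemma cover: fixes x :: "real^2" shows "(0 \<le> x$1 - x$2 \<and> 0 \<le> x$2) \<or> (0 \<le> x$1 \<and> 0 \<le> x$2 - x$1) \<or> (0 \<le> x$1 + x$2 \<and> 0 \<le> - x$1) \<or>
   (0 \<le> x$2 \<and> 0 \<le> - x$1 - x$2) \<or> (0 \<le> x$2 - x$1 \<and> 0 \<le> - x$2) \<or> (0 \<le> - x$1 \<and> 0 \<le> x$1 - x$2) \<or>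
   (0 \<le> -2 * x$1 - x$2 \<and> 0 \<le> x$1) \<or> (0 \<le> - x$1 - x$2 \<and> 0 \<le> 2 * x$1 + x$2) \<or> (0 \<le> - x$2 \<and> 0 \<le> x$1 + x$2)"
  by linarith


definition "GQ (w::real^2) = (if w$1 \<le> 0 \<and> 0 \<le> w$2 then vector[-w$1, 2*w$1 - w$2]
   else if w$1 \<le> 0 \<and> w$2 \<le> w$1 then vector[w$2, -w$1] else (vector[w$1, w$2] :: real^2))"

definition "Gv (z::(real^2)\<times>(real^2)) = (let q = fst z; w = snd z in
  if q = 0 then GQ w
  else if q \<in> ray d1 then (let s = (q \<bullet> d1)/(d1 \<bullet> d1); t = w$1 in
       if t \<le> 0 then vector[s - t, 2*t - s] else (vector[s + t, -s] :: real^2))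
  else if q \<in> ray d2 then (let s = (q \<bullet> d2)/(d2 \<bullet> d2); t = w$2 in vector[-s + min t 0, -s - max t 0])
  else (let s = (q \<bullet> d3)/(d3 \<bullet> d3); t = w$1 in vector[t, s + \<bar>t\<bar>]))"

lemma sc_nz: "c \<noteq> 0 \<Longrightarrow> c *\<^sub>R d1 \<noteq> 0" "c \<noteq> 0 \<Longrightarrow> c *\<^sub>R d2 \<noteq> 0" "c \<noteq> 0 \<Longrightarrow> c *\<^sub>R d3 \<noteq> 0"
  using nz by auto

lemma coefs: "((c *\<^sub>R d1) \<bullet> d1) / (d1 \<bullet> d1) = c" "((c *\<^sub>R d2) \<bullet> d2) / (d2 \<bullet> d2) = c" "((c *\<^sub>R d3) \<bullet> d3) / (d3 \<bullet> d3) = c"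
  using nz by simp_all

lemma GL1: fixes x :: "real^2" assumes "0 \<le> x$1 - x$2" "0 \<le> x$2" shows "Gv (L1 x) = x"
  using assms by (auto simp: Gv_def GQ_def L1_def vec_eq_iff forall_2 Let_def)

lemma GL2: fixes x :: "real^2" assumes "0 \<le> x$1" "0 \<le> x$2 - x$1" shows "Gv (L2 x) = x"
proof (cases "x$2 - x$1 = 0")
  case True then show ?thesis using assms by (auto simp: Gv_def GQ_def L2_def vec_eq_iff forall_2 Let_def)
next
  case False then have s: "x$2 - x$1 > 0" using assms by simp
  then show ?thesis using assms sc_nz r_out[OF s] False by (auto simp: Gv_def L2_def vec_eq_iff forall_2 Let_def coefs)
qed

lemma GL3: fixes x :: "real^2" assumes "0 \<le> x$1 + x$2" "0 \<le> - x$1" shows "Gv (L3 x) = x"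
proof (cases "x$1 + x$2 = 0")
  case True then show ?thesis using assms by (auto simp: Gv_def GQ_def L3_def vec_eq_iff forall_2 Let_def)
next
  case False then have s: "x$1 + x$2 > 0" using assms by simp
  then show ?thesis using assms sc_nz r_out[OF s] False by (auto simp: Gv_def L3_def vec_eq_iff forall_2 Let_def coefs)
qed

lemma GL4: fixes x :: "real^2" assumes "0 \<le> x$2" "0 \<le> - x$1 - x$2" shows "Gv (L4 x) = x"
  using assms by (auto simp: Gv_def GQ_def L4_def vec_eq_iff forall_2 Let_def)

lemma GL5: fixes x :: "real^2" assumes "0 \<le> x$2 - x$1" "0 \<le> - x$2" shows "Gv (L5 x) = x"
proof (cases "x$2 = 0")
  case True then show ?thesis using assms by (auto simp: Gv_def GQ_def L5_def vec_eq_iff forall_2 Let_def)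
next
  case False then have s: "- x$2 > 0" using assms by simp
  then show ?thesis using assms sc_nz r_out[OF s] r_in[of "- x$2" d2] False by (auto simp: Gv_def L5_def vec_eq_iff forall_2 Let_def coefs)
qed

lemma GL6: fixes x :: "real^2" assumes "0 \<le> - x$1" "0 \<le> x$1 - x$2" shows "Gv (L6 x) = x"
proof (cases "x$1 = 0")
  case True then show ?thesis using assms by (auto simp: Gv_def GQ_def L6_def vec_eq_iff forall_2 Let_def)
next
  case False then have s: "- x$1 > 0" using assms by simp
  then show ?thesis using assms sc_nz r_out[OF s] r_in[of "- x$1" d2] False by (auto simp: Gv_def L6_def vec_eq_iff forall_2 Let_def coefs)
qed

lemma GL7: fixes x :: "real^2" assumes "0 \<le> -2 * x$1 - x$2" "0 \<le> x$1" shows "Gv (L7 x) = x"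
  using assms by (auto simp: Gv_def GQ_def L7_def vec_eq_iff forall_2 Let_def)

lemma GL8: fixes x :: "real^2" assumes "0 \<le> - x$1 - x$2" "0 \<le> 2 * x$1 + x$2" shows "Gv (L8 x) = x"
proof (cases "2 * x$1 + x$2 = 0")
  case True then show ?thesis using assms by (auto simp: Gv_def GQ_def L8_def vec_eq_iff forall_2 Let_def)
next
  case False then have s: "2 * x$1 + x$2 > 0" using assms by simp
  then show ?thesis using assms sc_nz r_in[of "2 * x$1 + x$2" d1] False by (auto simp: Gv_def L8_def vec_eq_iff forall_2 Let_def coefs)
qed

lemma GL9: fixes x :: "real^2" assumes "0 \<le> - x$2" "0 \<le> x$1 + x$2" shows "Gv (L9 x) = x"
proof (cases "x$2 = 0")
  case True then show ?thesis using assms by (auto simp: Gv_def GQ_def L9_def vec_eq_iff forall_2 Let_def)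
next
  case False then have s: "- x$2 > 0" using assms by simp
  then show ?thesis using assms sc_nz r_in[of "- x$2" d1] False by (auto simp: Gv_def L9_def vec_eq_iff forall_2 Let_def coefs)
qed

lemma GF: "Gv (Fv x) = x"
  using cover[of x] PF1 PF2 PF3 PF4 PF5 PF6 PF7 PF8 PF9 GL1 GL2 GL3 GL4 GL5 GL6 GL7 GL8 GL9
  by metis

lemma inj_Fv: "inj Fv"
  by (metis GF injI)


definition "Qc (w::real^2) \<longleftrightarrow> (0 \<le> w$2 \<and> w$2 \<le> w$1) \<or> (w$1 \<le> 0 \<and> 0 \<le> w$2) \<or> (w$2 \<le> w$1 \<and> w$1 \<le> 0)"
definition "Kv (z::(real^2)\<times>(real^2)) \<longleftrightarrow> (fst z = 0 \<and> Qc (snd z)) \<or> (\<exists>s>0. fst z = s *\<^sub>R d1 \<and> snd z $ 2 = 0) \<or>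
    (\<exists>s>0. fst z = s *\<^sub>R d2 \<and> snd z $ 1 = 0) \<or> (\<exists>s>0. fst z = s *\<^sub>R d3 \<and> snd z $ 1 = snd z $ 2)"

lemma LK: fixes x :: "real^2"
  shows "0 \<le> x$1 - x$2 \<Longrightarrow> 0 \<le> x$2 \<Longrightarrow> Kv (L1 x)"
    and "0 \<le> x$1 \<Longrightarrow> 0 \<le> x$2 - x$1 \<Longrightarrow> Kv (L2 x)"
    and "0 \<le> x$1 + x$2 \<Longrightarrow> 0 \<le> - x$1 \<Longrightarrow> Kv (L3 x)"
    and "0 \<le> x$2 \<Longrightarrow> 0 \<le> - x$1 - x$2 \<Longrightarrow> Kv (L4 x)"
    and "0 \<le> x$2 - x$1 \<Longrightarrow> 0 \<le> - x$2 \<Longrightarrow> Kv (L5 x)"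
    and "0 \<le> - x$1 \<Longrightarrow> 0 \<le> x$1 - x$2 \<Longrightarrow> Kv (L6 x)"
    and "0 \<le> -2 * x$1 - x$2 \<Longrightarrow> 0 \<le> x$1 \<Longrightarrow> Kv (L7 x)"
    and "0 \<le> - x$1 - x$2 \<Longrightarrow> 0 \<le> 2 * x$1 + x$2 \<Longrightarrow> Kv (L8 x)"
    and "0 \<le> - x$2 \<Longrightarrow> 0 \<le> x$1 + x$2 \<Longrightarrow> Kv (L9 x)"
proof -
  assume "0 \<le> x$1 - x$2" "0 \<le> x$2" then show "Kv (L1 x)" by (simp add: Kv_def Qc_def L1_def)
next
  assume h: "0 \<le> x$1" "0 \<le> x$2 - x$1"
  show "Kv (L2 x)"
  proof (cases "x$2 - x$1 = 0")
    case True then show ?thesis using h by (simp add: Kv_def Qc_def L2_def)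
  next
    case False then show ?thesis using h unfolding Kv_def L2_def by (intro disjI2 disjI2 disjI2 exI[of _ "x$2 - x$1"]) auto
  qed
next
  assume h: "0 \<le> x$1 + x$2" "0 \<le> - x$1"
  show "Kv (L3 x)"
  proof (cases "x$1 + x$2 = 0")
    case True then show ?thesis using h by (simp add: Kv_def Qc_def L3_def)
  next
    case False then show ?thesis using h unfolding Kv_def L3_def by (intro disjI2 disjI2 disjI2 exI[of _ "x$1 + x$2"]) auto
  qed
next
  assume "0 \<le> x$2" "0 \<le> - x$1 - x$2" then show "Kv (L4 x)" by (simp add: Kv_def Qc_def L4_def)
next
  assume h: "0 \<le> x$2 - x$1" "0 \<le> - x$2"
  show "Kv (L5 x)"
  proof (cases "x$2 = 0")
    case True then show ?thesis using h by (simp add: Kv_def Qc_def L5_def)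
  next
    case False then show ?thesis using h unfolding Kv_def L5_def by (intro disjI2 disjI2 disjI1 exI[of _ "- x$2"]) auto
  qed
next
  assume h: "0 \<le> - x$1" "0 \<le> x$1 - x$2"
  show "Kv (L6 x)"
  proof (cases "x$1 = 0")
    case True then show ?thesis using h by (simp add: Kv_def Qc_def L6_def)
  next
    case False then show ?thesis using h unfolding Kv_def L6_def by (intro disjI2 disjI2 disjI1 exI[of _ "- x$1"]) auto
  qed
next
  assume "0 \<le> -2 * x$1 - x$2" "0 \<le> x$1" then show "Kv (L7 x)" by (simp add: Kv_def Qc_def L7_def)
next
  assume h: "0 \<le> - x$1 - x$2" "0 \<le> 2 * x$1 + x$2"
  show "Kv (L8 x)"
  proof (cases "2 * x$1 + x$2 = 0")
    case True then show ?thesis using h by (simp add: Kv_def Qc_def L8_def)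
  next
    case False then show ?thesis using h unfolding Kv_def L8_def by (intro disjI2 disjI1 exI[of _ "2 * x$1 + x$2"]) auto
  qed
next
  assume h: "0 \<le> - x$2" "0 \<le> x$1 + x$2"
  show "Kv (L9 x)"
  proof (cases "x$2 = 0")
    case True then show ?thesis using h by (simp add: Kv_def Qc_def L9_def)
  next
    case False then show ?thesis using h unfolding Kv_def L9_def by (intro disjI2 disjI1 exI[of _ "- x$2"]) auto
  qed
qed

lemma KF: assumes "Kv z" shows "Fv (Gv z) = z"
proof -
  obtain q w where z: "z = (q,w)" by (cases z)
  from assms consider "q = 0" "Qc w" | s where "s > 0" "q = s *\<^sub>R d1" "w$2 = 0"
      | s where "s > 0" "q = s *\<^sub>R d2" "w$1 = 0" | s where "s > 0" "q = s *\<^sub>R d3" "w$1 = w$2"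
    by (auto simp: Kv_def z)
  then show ?thesis
  proof cases
    case 1
    show ?thesis
    proof (cases "w$1 \<le> 0 \<and> 0 \<le> w$2")
      case True
      define x :: "real^2" where "x = vector[-w$1, 2*w$1 - w$2]"
      have "Gv z = x" using 1 True by (simp add: Gv_def GQ_def z x_def)
      moreover have "Fv x = L7 x" using True by (intro PF7) (auto simp: x_def)
      moreover have "L7 x = z" using 1 by (simp add: L7_def x_def z vec_eq_iff forall_2)
      ultimately show ?thesis by simp
    next
      case False
      show ?thesis
      proof (cases "w$1 \<le> 0 \<and> w$2 \<le> w$1")
        case True
        define x :: "real^2" where "x = vector[w$2, -w$1]"
        have "Gv z = x" using 1 True False by (simp add: Gv_def GQ_def z x_def)
        moreover have "Fv x = L4 x" using True by (intro PF4) (auto simp: x_def)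
        moreover have "L4 x = z" using 1 by (simp add: L4_def x_def z vec_eq_iff forall_2)
        ultimately show ?thesis by simp
      next
        case F2: False
        have "GQ w = w" by (simp only: GQ_def if_not_P[OF False] if_not_P[OF F2]) (simp add: vec_eq_iff forall_2)
        then have "Gv z = w" using 1 by (simp add: Gv_def z)
        moreover have "Fv w = L1 w" using 1 False F2 by (intro PF1) (auto simp: Qc_def)
        moreover have "L1 w = z" using 1 by (simp add: L1_def z vec_eq_iff forall_2)
        ultimately show ?thesis by simp
      qed
    qed
  next
    case 2
    have q0: "q \<noteq> 0" "q \<in> ray d1" using 2 nz r_in[of s d1] by auto
    have sq: "(q \<bullet> d1)/(d1 \<bullet> d1) = s" using 2 coefs by simp
    show ?thesis
    proof (cases "w$1 \<le> 0")
      case True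
      define x :: "real^2" where "x = vector[s - w$1, 2*w$1 - s]"
      have "Gv z = x" using True q0 sq by (simp add: Gv_def z x_def Let_def)
      moreover have "Fv x = L8 x" using True 2 by (intro PF8) (auto simp: x_def)
      moreover have "L8 x = z" using 2 by (simp add: L8_def x_def z vec_eq_iff forall_2)
      ultimately show ?thesis by simp
    next
      case False
      define x :: "real^2" where "x = vector[s + w$1, -s]"
      have "Gv z = x" using False q0 sq by (simp add: Gv_def z x_def Let_def)
      moreover have "Fv x = L9 x" using False 2 by (intro PF9) (auto simp: x_def)
      moreover have "L9 x = z" using 2 by (simp add: L9_def x_def z vec_eq_iff forall_2)
      ultimately show ?thesis by simp
    qed
  next
    case 3
    have q0: "q \<noteq> 0" "q \<notin> ray d1" "q \<in> ray d2" using 3 nz r_in[of s d2] r_out(1)[of s] by auto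
    have sq: "(q \<bullet> d2)/(d2 \<bullet> d2) = s" using 3 coefs by simp
    show ?thesis
    proof (cases "w$2 \<le> 0")
      case True
      define x :: "real^2" where "x = vector[-s + w$2, -s]"
      have "Gv z = x" using True q0 sq by (simp add: Gv_def z x_def Let_def)
      moreover have "Fv x = L5 x" using True 3 by (intro PF5) (auto simp: x_def)
      moreover have "L5 x = z" using 3 by (simp add: L5_def x_def z vec_eq_iff forall_2)
      ultimately show ?thesis by simp
    next
      case False
      define x :: "real^2" where "x = vector[-s, -s - w$2]"
      have "Gv z = x" using False q0 sq by (simp add: Gv_def z x_def Let_def)
      moreover have "Fv x = L6 x" using False 3 by (intro PF6) (auto simp: x_def)
      moreover have "L6 x = z" using 3 by (simp add: L6_def x_def z vec_eq_iff forall_2)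
      ultimately show ?thesis by simp
    qed
  next
    case 4
    have q0: "q \<noteq> 0" "q \<notin> ray d1" "q \<notin> ray d2" using 4 nz r_out(2,3)[of s] by auto
    have sq: "(q \<bullet> d3)/(d3 \<bullet> d3) = s" using 4 coefs by simp
    show ?thesis
    proof (cases "w$1 \<ge> 0")
      case True
      define x :: "real^2" where "x = vector[w$1, s + w$1]"
      have "Gv z = x" using True q0 sq by (simp add: Gv_def z x_def Let_def)
      moreover have "Fv x = L2 x" using True 4 by (intro PF2) (auto simp: x_def)
      moreover have "L2 x = z" using 4 by (simp add: L2_def x_def z vec_eq_iff forall_2)
      ultimately show ?thesis by simp
    next
      case False
      define x :: "real^2" where "x = vector[w$1, s - w$1]"
      have "Gv z = x" using False q0 sq by (simp add: Gv_def z x_def Let_def)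
      moreover have "Fv x = L3 x" using False 4 by (intro PF3) (auto simp: x_def)
      moreover have "L3 x = z" using 4 by (simp add: L3_def x_def z vec_eq_iff forall_2)
      ultimately show ?thesis by simp
    qed
  qed
qed

lemma range_Fv: "z \<in> range Fv \<longleftrightarrow> Kv z"
proof
  assume "z \<in> range Fv"
  then obtain x where x: "z = Fv x" by blast
  show "Kv z" unfolding x
    using cover[of x] PF1 PF2 PF3 PF4 PF5 PF6 PF7 PF8 PF9 LK by metis
next
  assume "Kv z" then show "z \<in> range Fv" using KF by (metis rangeI)
qed


lemma ray_split: "d \<noteq> 0 \<Longrightarrow> q \<in> ray d \<longleftrightarrow> q = 0 \<or> (\<exists>s>0. q = s *\<^sub>R d)"
  by (auto simp: ray_def)

lemma loc_vertex:
  assumes "norm z < 1/2"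
  shows "(0,0) + z \<in> Stil (ray d1) (ray d2) (ray d3) \<longleftrightarrow> Kv z"
proof -
  obtain q w where z: "z = (q,w)" by (cases z)
  have w: "\<bar>w$1\<bar> < 1/2" "\<bar>w$2\<bar> < 1/2" using small_comp[OF assms] by (auto simp: z)
  have i1: "w$2 \<in> \<int> \<longleftrightarrow> w$2 = 0" using w by (intro int_near0) auto
  have i2: "w$1 \<in> \<int> \<longleftrightarrow> w$1 = 0" using w by (intro int_near0) auto
  have i3: "w$1 - w$2 \<in> \<int> \<longleftrightarrow> w$1 = w$2" using w int_near0[of "w$1 - w$2"] by auto
  have fr: "frac (w$2) \<le> frac (w$1) \<longleftrightarrow>
     (0 \<le> w$1 \<and> 0 \<le> w$2 \<and> w$2 \<le> w$1) \<or> (w$1 < 0 \<and> 0 \<le> w$2) \<or> (w$1 < 0 \<and> w$2 < 0 \<and> w$2 \<le> w$1)"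
  proof (cases "0 \<le> w$1"; cases "0 \<le> w$2")
    assume "0 \<le> w$1" "0 \<le> w$2" then show ?thesis using w frac_small_pos[of "w$1"] frac_small_pos[of "w$2"] by auto
  next
    assume "0 \<le> w$1" "\<not> 0 \<le> w$2" then show ?thesis using w frac_small_pos[of "w$1"] frac_small_neg[of "w$2"] by auto
  next
    assume "\<not> 0 \<le> w$1" "0 \<le> w$2" then show ?thesis using w frac_small_neg[of "w$1"] frac_small_pos[of "w$2"] by auto
  next
    assume "\<not> 0 \<le> w$1" "\<not> 0 \<le> w$2" then show ?thesis using w frac_small_neg[of "w$1"] frac_small_neg[of "w$2"] by auto
  qed
  have L: "(0,0) + z \<in> Stil (ray d1) (ray d2) (ray d3) \<longleftrightarrow>
     (q \<in> ray d1 \<and> w$2 = 0) \<or> (q \<in> ray d2 \<and> w$1 = 0) \<or> (q \<in> ray d3 \<and> w$1 = w$2) \<or> (q = 0 \<and> frac (w$2) \<le> frac (w$1))"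
    using i1 i2 i3 by (simp add: z Stil_def)
  show ?thesis
  proof (cases "q = 0")
    case True
    have "Kv z \<longleftrightarrow> Qc w" using True nz by (auto simp: Kv_def z)
    moreover have "(0,0) + z \<in> Stil (ray d1) (ray d2) (ray d3) \<longleftrightarrow> w$2 = 0 \<or> w$1 = 0 \<or> w$1 = w$2 \<or> frac (w$2) \<le> frac (w$1)"
      unfolding L using True by (auto simp: ray_def)
    moreover have "(w$2 = 0 \<or> w$1 = 0 \<or> w$1 = w$2 \<or> frac (w$2) \<le> frac (w$1)) \<longleftrightarrow> Qc w"
      unfolding fr Qc_def by linarith
    ultimately show ?thesis by simp
  next
    case False
    then show ?thesis unfolding L using nz by (auto simp: Kv_def z ray_split)
  qed
qed

lemma lin_L: "linear L1" "linear L2" "linear L3" "linear L4" "linear L5" "linear L6" "linear L7" "linear L8" "linear L9"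
  by (rule linearI; simp add: Ldefs vec_eq_iff forall_2 algebra_simps)+

lemma inj_L: "inj L1" "inj L2" "inj L3" "inj L4" "inj L5" "inj L6" "inj L7" "inj L8" "inj L9"
  using nz by (intro linear_inj0 lin_L; simp add: Ldefs vec_eq_iff forall_2 zero_prod_def; linarith?)+

definition Pcv :: "((real^2) \<times> (real^2) \<times> (real^2 \<Rightarrow> (real^2) \<times> (real^2))) set" where "Pcv = {(vector[1,-1], vector[0,1], L1), (vector[1,0], vector[-1,1], L2), (vector[1,1], vector[-1,0], L3),
   (vector[0,1], vector[-1,-1], L4), (vector[-1,1], vector[0,-1], L5), (vector[-1,0], vector[1,-1], L6),
   (vector[-2,-1], vector[1,0], L7), (vector[-1,-1], vector[2,1], L8), (vector[0,-1], vector[1,1], L9)}"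

lemma good_vertex: "good (Stil (ray d1) (ray d2) (ray d3)) (0,0)"
proof -
  have c1: "finite Pcv" by (simp add: Pcv_def)
  have c2: "\<forall>\<alpha> \<beta> L. (\<alpha>, \<beta>, L) \<in> Pcv \<longrightarrow> linear L \<and> inj L"
    using lin_L inj_L by (auto simp: Pcv_def)
  have c3: "\<forall>x. \<exists>(\<alpha>, \<beta>, L)\<in>Pcv. 0 \<le> \<alpha> \<bullet> x \<and> 0 \<le> \<beta> \<bullet> x"
  proof
    fix x :: "real^2"
    show "\<exists>(\<alpha>, \<beta>, L)\<in>Pcv. 0 \<le> \<alpha> \<bullet> x \<and> 0 \<le> \<beta> \<bullet> x"
      using cover[of x] unfolding Pcv_def by (simp add: vec2_inner)
  qed
  have c4: "\<forall>\<alpha> \<beta> L x. (\<alpha>, \<beta>, L) \<in> Pcv \<longrightarrow> 0 \<le> \<alpha> \<bullet> x \<longrightarrow> 0 \<le> \<beta> \<bullet> x \<longrightarrow> Fv x = L x"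
  proof (intro allI impI)
    fix \<alpha> \<beta> L and x :: "real^2"
    assume "(\<alpha>, \<beta>, L) \<in> Pcv" "0 \<le> \<alpha> \<bullet> x" "0 \<le> \<beta> \<bullet> x"
    then show "Fv x = L x" unfolding Pcv_def
      by (auto simp: vec2_inner intro!: PF1 PF2 PF3 PF4 PF5 PF6 PF7 PF8 PF9)
  qed
  have c7: "\<forall>z. norm z < 1/2 \<longrightarrow> ((0,0) + z \<in> Stil (ray d1) (ray d2) (ray d3) \<longleftrightarrow> z \<in> range Fv)"
    using loc_vertex range_Fv by simp
  show ?thesis unfolding good_def
    by (intro exI[of _ Fv] exI[of _ Pcv] exI[of _ "1/2"] conjI c1 c2 c3 c4 inj_Fv c7) simp
qed

end



lemma cr_neg_right [simp]: "cr x (- y) = - cr x y" by (simp add: cr_def)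
lemma cr_diff_right [simp]: "cr x (y - z) = cr x y - cr x z" by (simp add: cr_def algebra_simps)

lemma good_q0:
  assumes ok: "dirs_ok da db dc" and p: "(0, w0) \<in> Stil (ray da) (ray db) (ray dc)"
  shows "good (Stil (ray da) (ray db) (ray dc)) (0, w0)"
proof -
  define n :: "real^2" where "n = vector [of_int \<lfloor>w0$1\<rfloor>, of_int \<lfloor>w0$2\<rfloor>]"
  have n: "integral_vec n" by (simp add: n_def integral_vec_iff)
  define w1 where "w1 = w0 - n"
  define a where "a = w1$1"
  define b where "b = w1$2"
  have ab: "a = frac (w0$1)" "b = frac (w0$2)" by (simp_all add: a_def b_def w1_def n_def frac_def)
  have a01: "0 \<le> a" "a < 1" "0 \<le> b" "b < 1" using ab frac_lt_1 by auto
  have w1: "w1 = vector [a, b]" by (simp add: a_def b_def vec_eq_iff forall_2)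
  have mem: "(0, w1) \<in> Stil (ray da) (ray db) (ray dc)"
    using p Stil_inv_iff[OF n, of 0 w1] by (simp add: w1_def)
  have nz: "da \<noteq> 0" "db \<noteq> 0" "dc \<noteq> 0" using ok dirs_nonzero by (auto simp: dirs_ok_def)
  have "good (Stil (ray da) (ray db) (ray dc)) (0, w1)"
  proof (cases "a = 0"; cases "b = 0")
    assume "a = 0" "b = 0"
    then have w10: "w1 = 0" by (simp add: w1 vec_eq_iff forall_2)
    interpret vert da db dc by (unfold_locales) (rule ok)
    show ?thesis using good_vertex by (simp add: w10 zero_prod_def)
  next
    assume "a = 0" "b \<noteq> 0"
    then show ?thesis using good_edge2[OF nz(2), of b "ray da" "ray dc"] a01 by (simp add: w1)
  next
    assume "a \<noteq> 0" "b = 0"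
    then show ?thesis using good_edge1[OF nz(1), of a "ray db" "ray dc"] a01 by (simp add: w1)
  next
    assume h: "a \<noteq> 0" "b \<noteq> 0"
    show ?thesis
    proof (cases "a = b")
      case True
      then show ?thesis using good_edge3[OF nz(3), of a "ray da" "ray db"] a01 h by (simp add: w1)
    next
      case False
      have na: "a \<notin> \<int>" "b \<notin> \<int>" using a01 h by (intro not_int01; simp)+
      have nab: "a - b \<notin> \<int>"
      proof (cases "a < b")
        case True
        have "b - a \<notin> \<int>" using a01 True by (intro not_int01) auto
        then show ?thesis by (metis Ints_minus minus_diff_eq)
      next
        case False2: False
        then show ?thesis using a01 False by (intro not_int01) auto
      qed
      have "frac b \<le> frac a" using mem na nab by (auto simp: Stil_def w1)
      then have "b < a" using a01 False by (simp add: frac_small_pos)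
      then show ?thesis using good_int[of b a] a01 h by (simp add: w1)
    qed
  qed
  then show ?thesis using good_normalize[of _ _ _ w0 n] n by (simp add: w1_def)
qed

lemma good_all:
  assumes ok: "dirs_ok da db dc" and p: "p \<in> Stil (ray da) (ray db) (ray dc)"
  shows "good (Stil (ray da) (ray db) (ray dc)) p"
proof -
  obtain q w where pq: "p = (q,w)" by (cases p)
  show ?thesis
  proof (cases "q = 0")
    case True then show ?thesis using good_q0[OF ok] p pq by simp
  next
    case False then show ?thesis using good_qnz[OF ok] p pq by simp
  qed
qed

lemma set_eq:
  fixes v :: "nat \<Rightarrow> real^2" and D :: "nat \<Rightarrow> (real^2) set"
  assumes prim: "\<And>j. j \<in> {1,2,3} \<Longrightarrow> primitive_vec (v j)"
    and v3: "v 3 = - (v 1 + v 2)" and d: "cr (v 1) (v 2) \<noteq> 0"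
  shows "(\<Union>j\<in>{1,2,3::nat}. D j \<times> circle_subgroup (v j)) \<union>
      (\<lambda>w. (0::real^2, torus_map (Mw (v 1) (v 2) w))) ` {w. frac (w$2) \<le> frac (w$1)}
    = Psi (v 1) (v 2) ` Stil (D 1) (D 2) (D 3)"
proof (intro equalityI subsetI)
  fix x assume "x \<in> (\<Union>j\<in>{1,2,3::nat}. D j \<times> circle_subgroup (v j)) \<union>
      (\<lambda>w. (0::real^2, torus_map (Mw (v 1) (v 2) w))) ` {w. frac (w$2) \<le> frac (w$1)}"
  then consider (circ) j q t where "j \<in> {1,2,3}" "q \<in> D j" "x = (q, torus_map (t *\<^sub>R v j))"
    | (Q) w where "frac (w$2) \<le> frac (w$1)" "x = (0, torus_map (Mw (v 1) (v 2) w))"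
    by (auto simp: circle_subgroup_def)
  then show "x \<in> Psi (v 1) (v 2) ` Stil (D 1) (D 2) (D 3)"
  proof cases
    case circ
    define w where "w = Nw (v 1) (v 2) (t *\<^sub>R v j)"
    have Pw: "Psi (v 1) (v 2) (q, w) = x" using circ(3) Mw_Nw[OF d] by (simp add: Psi_def w_def)
    have "(q, w) \<in> Stil (D 1) (D 2) (D 3)"
    proof -
      have "j = 1 \<or> j = 2 \<or> j = 3" using circ(1) by auto
      then show ?thesis
      proof (elim disjE)
        assume j: "j = 1"
        have "w$2 = 0" by (simp add: w_def Nw_def j)
        then show ?thesis using circ(2) j by (simp add: Stil_def)
      next
        assume j: "j = 2"
        have "w$1 = 0" by (simp add: w_def Nw_def j)
        then show ?thesis using circ(2) j by (simp add: Stil_def)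
      next
        assume j: "j = 3"
        have "w$1 - w$2 = 0" by (simp add: w_def Nw_def j v3 cr_anti[of "v 2" "v 1"])
        then show ?thesis using circ(2) j by (simp add: Stil_def)
      qed
    qed
    then show ?thesis using Pw by (metis image_eqI)
  next
    case Q
    have "(0, w) \<in> Stil (D 1) (D 2) (D 3)" using Q(1) by (simp add: Stil_def)
    moreover have "Psi (v 1) (v 2) (0, w) = x" using Q(2) by (simp add: Psi_def)
    ultimately show ?thesis by (metis image_eqI)
  qed
next
  fix x assume "x \<in> Psi (v 1) (v 2) ` Stil (D 1) (D 2) (D 3)"
  then obtain q w where qw: "(q,w) \<in> Stil (D 1) (D 2) (D 3)" "x = (q, torus_map (Mw (v 1) (v 2) w))"
    by (auto simp: Psi_def)
  have circ: "torus_map (Mw (v 1) (v 2) w) \<in> circle_subgroup (v j)"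
    if jj: "j \<in> {1,2,3}" and cj: "cr (v j) (Mw (v 1) (v 2) w) \<in> \<int>" for j
  proof -
    obtain t n where tn: "integral_vec n" "Mw (v 1) (v 2) w = t *\<^sub>R v j + n"
      using primitive_line[OF prim[OF jj] cj] by blast
    have "torus_map (Mw (v 1) (v 2) w) = torus_map (t *\<^sub>R v j)" using tn torus_map_periodic by simp
    then show ?thesis by (auto simp: circle_subgroup_def)
  qed
  from qw(1) consider "q \<in> D 1" "w$2 \<in> \<int>" | "q \<in> D 2" "w$1 \<in> \<int>" | "q \<in> D 3" "w$1 - w$2 \<in> \<int>"
    | "q = 0" "frac (w$2) \<le> frac (w$1)"
    by (auto simp: Stil_def)
  then show "x \<in> (\<Union>j\<in>{1,2,3::nat}. D j \<times> circle_subgroup (v j)) \<union>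
      (\<lambda>w. (0::real^2, torus_map (Mw (v 1) (v 2) w))) ` {w. frac (w$2) \<le> frac (w$1)}"
  proof cases
    case 1
    then have "torus_map (Mw (v 1) (v 2) w) \<in> circle_subgroup (v 1)" using circ[of 1] cr_Mw1[OF d] by simp
    then show ?thesis using 1 qw(2) by blast
  next
    case 2
    then have "torus_map (Mw (v 1) (v 2) w) \<in> circle_subgroup (v 2)" using circ[of 2] cr_Mw2[OF d] by simp
    then show ?thesis using 2 qw(2) by blast
  next
    case 3
    then have "torus_map (Mw (v 1) (v 2) w) \<in> circle_subgroup (v 3)" using circ[of 3] cr_Mw3[OF d] v3 by simp
    then show ?thesis using 3 qw(2) by blast
  next
    case 4
    then show ?thesis using qw(2) by blast
  qed
qed

theorem lemma7p9:
  fixes v :: "nat \<Rightarrow> real^2" and D :: "nat \<Rightarrow> (real^2) set"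
  assumes prim: "\<And>j. j \<in> {1,2,3} \<Longrightarrow> primitive_vec (v j)"
    and spans: "span {v 1, v 2, v 3} = UNIV"
    and sum0: "v 1 + v 2 + v 3 = 0"
    and edges: "(D 1, D 2, D 3) \<in> {(edge1, edge2, edge3), (edge2, edge3, edge1), (edge3, edge1, edge2)}"
  shows "\<exists>Q \<subseteq> {0::real^2} \<times> torus.
           pw_smooth_surface ((\<Union>j\<in>{1,2,3::nat}. D j \<times> circle_subgroup (v j)) \<union> Q)"
proof -
  have "v 3 = (v 1 + v 2 + v 3) - (v 1 + v 2)" by (simp add: algebra_simps)
  then have v3: "v 3 = - (v 1 + v 2)" unfolding sum0 by simp
  have iv: "integral_vec (v 1)" "integral_vec (v 2)" using prim by (auto simp: primitive_vec_def)
  have d: "cr (v 1) (v 2) \<noteq> 0"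
  proof
    assume c: "cr (v 1) (v 2) = 0"
    have "cr (v 1) 0 = 0" by (simp add: cr_def)
    then have "subspace {u. cr (v 1) u = 0}" by (intro subspaceI) auto
    moreover have "{v 1, v 2, v 3} \<subseteq> {u. cr (v 1) u = 0}" using c v3 by auto
    ultimately have "span {v 1, v 2, v 3} \<subseteq> {u. cr (v 1) u = 0}" by (rule span_minimal[rotated])
    then have "cr (v 1) (vector [1,0]) = 0" "cr (v 1) (vector [0,1]) = 0" using spans by auto
    then have "v 1 = 0" by (simp add: cr_def vec_eq_iff forall_2)
    then show False using primitive_nonzero prim by auto
  qed
  obtain da db dc where abc: "D 1 = ray da" "D 2 = ray db" "D 3 = ray dc" "dirs_ok da db dc"
  proof -
    have ne: "dd1 \<noteq> dd2" "dd1 \<noteq> dd3" "dd2 \<noteq> dd3" by (auto simp: vec_eq_iff forall_2)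
    from edges consider "D 1 = ray dd1" "D 2 = ray dd2" "D 3 = ray dd3" | "D 1 = ray dd2" "D 2 = ray dd3" "D 3 = ray dd1"
      | "D 1 = ray dd3" "D 2 = ray dd1" "D 3 = ray dd2"
      by (auto simp: edge1_def edge2_def edge3_def)
    then show ?thesis using that ne by cases (auto simp: dirs_ok_def)
  qed
  define Qs where "Qs = (\<lambda>w. (0::real^2, torus_map (Mw (v 1) (v 2) w))) ` {w. frac (w$2) \<le> frac (w$1)}"
  have Qsub: "Qs \<subseteq> {0::real^2} \<times> torus" by (auto simp: Qs_def torus_def)
  have eq: "(\<Union>j\<in>{1,2,3::nat}. D j \<times> circle_subgroup (v j)) \<union> Qs = Psi (v 1) (v 2) ` Stil (D 1) (D 2) (D 3)"
    unfolding Qs_def by (rule set_eq[OF prim v3 d])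
  have "pw_smooth_surface (Psi (v 1) (v 2) ` Stil (D 1) (D 2) (D 3))"
    unfolding pw_smooth_surface_def
  proof
    fix x assume "x \<in> Psi (v 1) (v 2) ` Stil (D 1) (D 2) (D 3)"
    then obtain p where p: "p \<in> Stil (D 1) (D 2) (D 3)" "x = Psi (v 1) (v 2) p" by blast
    have "good (Stil (D 1) (D 2) (D 3)) p" using good_all[OF abc(4)] p(1) abc(1-3) by simp
    then show "\<exists>(W::(real^2) set) N \<phi> \<phi>' P. open W \<and> x \<in> N \<and> openin (top_of_set (Psi (v 1) (v 2) ` Stil (D 1) (D 2) (D 3))) N \<and>
        homeomorphism W N \<phi> \<phi>' \<and> finite P \<and> (\<forall>C\<in>P. polytope C) \<and> W \<subseteq> \<Union>P \<and>
        (\<forall>C\<in>P. \<exists>V \<psi>. open V \<and> C \<inter> W \<subseteq> V \<and> smooth_on V \<psi> \<and>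
          (\<forall>y\<in>C \<inter> W. inj (frechet_derivative \<psi> (at y)) \<and> \<phi> y = \<psi> y))"
      unfolding p(2) by (rule good_chart[OF iv d])
  qed
  then have "pw_smooth_surface ((\<Union>j\<in>{1,2,3::nat}. D j \<times> circle_subgroup (v j)) \<union> Qs)"
    by (simp only: eq)
  then show ?thesis using Qsub by blast
qed


end
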